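(* Let $M,N$ be positive integers, $0<z_0<\dots<z_{N-1}$ real with real positive $M$th roots, $(s^{(t)})_{t\in\mathbb Z}$ real with $s^{(t)}<z_0$, and $w^{(m)}_r>0$ ($r=0,\dots,N-1$, $m\in\mathbb Z$) with $w_r^{(m)}=w_r^{(m\bmod M)}$, such that the positivity condition \[ w^{(m)}_{r_0,\dots,r_{n-3},r_{n-2}}\,w^{(m+1)}_{r_0,\dots,r_{n-3},r_{n-1}}\,z_{r_{n-1}}^{1/M}>w^{(m+1)}_{r_0,\dots,r_{n-3},r_{n-2}}\,w^{(m)}_{r_0,\dots,r_{n-3},r_{n-1}}\,z_{r_{n-2}}^{1/M} \] holds for all $m=0,\dots,M-1$ and all $0\le r_0<\dots<r_{n-1}\le N-1$, $n=2,\dots,N$ (with the $w_{r_0,\dots,r_{n-1}}^{(m)}$ defined recursively as in the context). For $k,t\in\mathbb Z$ let $\tau^{(k,t)}_0:=1$, $\tau^{(k,t)}_n:=0$ for $n>N$, and for $1\le n\le N$ \[ \tau^{(k,t)}_n:=\sum_{0\le r_0<\dots<r_{n-1}\le N-1}w^{(k)}_{r_0}w^{(k+1)}_{r_0,r_1}\cdots w^{(k+n-1)}_{r_0,\dots,r_{n-1}}\prod_{j=0}^{n-1}\Big(z_{r_j}^{k/M}\prod_{\tau=0}^{t-1}(z_{r_j}-s^{(\tau)})\Big)\prod_{0\le i<j\le n-1}(z_{r_j}-z_{r_i}). \] Define, for $k,t\in\mathbb Z$, \[ q^{(k,t)}_n=\frac{\tau^{(k,t)}_n\tau^{(k+1,t)}_{n+1}}{\tau^{(k,t)}_{n+1}\tau^{(k+1,t)}_n},\quad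 d^{(k,t)}_n=\frac{\tau^{(k,t+1)}_n\tau^{(k+1,t)}_{n+1}}{\tau^{(k,t)}_{n+1}\tau^{(k+1,t+1)}_n}\quad(0\le n\le N-1), \] \[ e^{(k,t)}_n=\frac{\tau^{(k,t)}_{n+2}\tau^{(k+M,t)}_n}{\tau^{(k,t)}_{n+1}\tau^{(k+M,t)}_{n+1}},\quad \tilde e^{(k,t)}_n=\frac{\tau^{(k,t)}_{n+2}\tau^{(k,t+1)}_n}{\tau^{(k,t)}_{n+1}\tau^{(k,t+1)}_{n+1}},\quad f^{(k,t)}_n=-s^{(t)}\frac{\tau^{(k,t)}_{n+2}\tau^{(k+M,t+1)}_n}{\tau^{(k,t+1)}_{n+1}\tau^{(k+M,t)}_{n+1}}\quad(0\le n\le N-1). \] Then these variables solve the nonautonomous discrete hungry Toda lattice with finite lattice boundary condition: for all $k,t\in\mathbb Z$, $e^{(k,t)}_{N-1}=\tilde e^{(k,t)}_{N-1}=0$, \begin{gather*} q^{(k,t+1)}_n=d^{(k,t)}_n+\tilde e^{(k,t)}_n,\quad e^{(k,t+1)}_n=f^{(k,t)}_n+\tilde e^{(k+M,t)}_n\quad(0\le n\le N-1),\\ d^{(k,t)}_{n+1}=d^{(k,t)}_n\frac{q^{(k,t)}_{n+1}}{q^{(k,t+1)}_n},\quad f^{(k,t)}_{n+1}=f^{(k,t)}_n\frac{e^{(k,t)}_{n+1}}{e^{(k,t+1)}_n},\quad \tilde e^{(k+1,t)}_n=\tilde e^{(k,t)}_n\frac{q^{(k,t)}_{n+1}}{q^{(k,t+1)}_n},\quad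 \tilde e^{(k,t)}_{n+1}=\tilde e^{(k+M,t)}_n\frac{e^{(k,t)}_{n+1}}{e^{(k,t+1)}_n}\quad(0\le n\le N-2), \end{gather*} with boundary conditions \[ d^{(k,t)}_0=q^{(k,t)}_0,\quad f^{(k,t)}_0=\frac{-e^{(k,t)}_0s^{(t)}}{\prod_{j=0}^{M-1}q^{(k+j,t)}_0-s^{(t)}},\quad \tilde e^{(k,t)}_0=\frac{e^{(k,t)}_0\prod_{j=0}^{M-1}q^{(k+j,t)}_0}{\prod_{j=0}^{M-1}q^{(k+j,t)}_0-s^{(t)}}. \] Moreover $q^{(k,t)}_n,d^{(k,t)}_n>0$ for $0\le n\le N-1$ and $e^{(k,t)}_n,\tilde e^{(k,t)}_n>0$ for $0\le n\le N-2$; and if $s^{(t)}\le0$ for all $t$, then $f^{(k,t)}_n\ge0$ for all $k,t$ and $0\le n\le N-1$.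
   Context: The numbers $w^{(m)}_{r_0,\dots,r_{n-1}}$ for $n\ge2$, $0\le r_0<\dots<r_{n-1}\le N-1$, $m\in\mathbb Z$ are defined recursively by \[ w^{(m+1)}_{r_0,\dots,r_{n-2},r_{n-1}}:=\frac{w^{(m)}_{r_0,\dots,r_{n-3},r_{n-2}}w^{(m+1)}_{r_0,\dots,r_{n-3},r_{n-1}}z_{r_{n-1}}^{1/M}-w^{(m+1)}_{r_0,\dots,r_{n-3},r_{n-2}}w^{(m)}_{r_0,\dots,r_{n-3},r_{n-1}}z_{r_{n-2}}^{1/M}}{w^{(m)}_{r_0,\dots,r_{n-3},r_{n-2}}}, \] where for $n=2$ the list $r_0,\dots,r_{n-3}$ is empty. Products $\prod_{\tau=0}^{t-1}a_\tau$ equal $1$ for $t=0$ and $\prod_{\tau=t}^{-1}a_\tau^{-1}$ for $t<0$. *)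

theory Defs
  imports Complex_Main
begin

definition zroot :: "nat \<Rightarrow> (nat \<Rightarrow> real) \<Rightarrow> nat \<Rightarrow> real" where
  "zroot M z r = root M (z r)"

text \<open>The recursively defined numbers w, indexed by the REVERSED index list
  [r_{n-1}, r_{n-2}, ..., r_0]; the base weights are w m r.\<close>
fun wrev :: "(int \<Rightarrow> nat \<Rightarrow> real) \<Rightarrow> (nat \<Rightarrow> real) \<Rightarrow> nat \<Rightarrow> int \<Rightarrow> nat list \<Rightarrow> real" where
  "wrev w z M m [] = 1"
| "wrev w z M m [r] = w m r"
| "wrev w z M m (b # a # p) =
     (wrev w z M (m - 1) (a # p) * wrev w z M m (b # p) * zroot M z b
      - wrev w z M m (a # p) * wrev w z M (m - 1) (b # p) * zroot M z a)
     / wrev w z M (m - 1) (a # p)"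

definition wseq :: "(int \<Rightarrow> nat \<Rightarrow> real) \<Rightarrow> (nat \<Rightarrow> real) \<Rightarrow> nat \<Rightarrow> int \<Rightarrow> nat list \<Rightarrow> real" where
  "wseq w z M m rs = wrev w z M m (rev rs)"

definition gprod :: "(int \<Rightarrow> real) \<Rightarrow> int \<Rightarrow> real" where
  "gprod a t = (if 0 \<le> t then (\<Prod>\<tau>\<in>{0..<t}. a \<tau>) else (\<Prod>\<tau>\<in>{t..<0}. inverse (a \<tau>)))"

text \<open>tau^{(k,t)}_n; the sum over 0 <= r_0 < ... < r_{n-1} <= N-1 is a sum over
  n-element subsets S of {0..N-1}, with rs the increasing enumeration of S.\<close>
definition tau :: "(int \<Rightarrow> nat \<Rightarrow> real) \<Rightarrow> (nat \<Rightarrow> real) \<Rightarrow> (int \<Rightarrow> real) \<Rightarrow> nat \<Rightarrow> nat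
                    \<Rightarrow> int \<Rightarrow> int \<Rightarrow> nat \<Rightarrow> real" where
  "tau w z s M N k t n =
    (if n = 0 then 1 else if N < n then 0 else
     (\<Sum>S\<in>{S. S \<subseteq> {..<N} \<and> card S = n}.
        let rs = sorted_list_of_set S in
        (\<Prod>j<n. wseq w z M (k + int j) (take (Suc j) rs))
        * (\<Prod>j<n. z (rs ! j) powr (real_of_int k / real M)
                   * gprod (\<lambda>\<tau>. z (rs ! j) - s \<tau>) t)
        * (\<Prod>j<n. \<Prod>i<j. z (rs ! j) - z (rs ! i))))"

definition qv where
  "qv w z s M N k t n = tau w z s M N k t n * tau w z s M N (k+1) t (n+1)
      / (tau w z s M N k t (n+1) * tau w z s M N (k+1) t n)"

definition dv where
  "dv w z s M N k t n = tau w z s M N k (t+1) n * tau w z s M N (k+1) t (n+1)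
      / (tau w z s M N k t (n+1) * tau w z s M N (k+1) (t+1) n)"

definition ev where
  "ev w z s M N k t n = tau w z s M N k t (n+2) * tau w z s M N (k + int M) t n
      / (tau w z s M N k t (n+1) * tau w z s M N (k + int M) t (n+1))"

definition etv where
  "etv w z s M N k t n = tau w z s M N k t (n+2) * tau w z s M N k (t+1) n
      / (tau w z s M N k t (n+1) * tau w z s M N k (t+1) (n+1))"

definition fv where
  "fv w z s M N k t n = - s t * (tau w z s M N k t (n+2) * tau w z s M N (k + int M) (t+1) n
      / (tau w z s M N k (t+1) (n+1) * tau w z s M N (k + int M) t (n+1)))"

end

theory Submission
  imports Defs "Jordan_Normal_Form.Determinant"
begin

definition Dl :: "(nat \<Rightarrow> real) list \<Rightarrow> real" where
  "Dl xs = det (mat (length xs) (length xs) (\<lambda>(i,j). (xs ! i) j))"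

definition cof :: "(nat \<Rightarrow> real) list \<Rightarrow> nat \<Rightarrow> real" where
  "cof xs j = (-1)^(length xs + j) *
     det (mat (length xs) (length xs) (\<lambda>(i,j'). (xs!i) (if j' < j then j' else Suc j')))"

lemma Dl_last: "Dl (xs @ [v]) = (\<Sum>j < Suc (length xs). v j * cof xs j)"
proof -
  let ?n = "length xs"
  define A where "A = mat (Suc ?n) (Suc ?n) (\<lambda>(i,j). ((xs@[v]) ! i) j)"
  have A: "A \<in> carrier_mat (Suc ?n) (Suc ?n)" unfolding A_def by simp
  have "Dl (xs @ [v]) = det A" unfolding Dl_def A_def by simp
  also have "\<dots> = (\<Sum>j<Suc ?n. A $$ (?n, j) * cofactor A ?n j)"
    by (rule laplace_expansion_row[OF A], simp)
  also have "\<dots> = (\<Sum>j < Suc ?n. v j * cof xs j)"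
  proof (rule sum.cong[OF refl])
    fix j assume j: "j \<in> {..<Suc ?n}"
    have "mat_delete A ?n j = mat ?n ?n (\<lambda>(i,j'). (xs!i) (if j' < j then j' else Suc j'))"
      unfolding mat_delete_def A_def using j by (intro eq_matI) (auto simp: nth_append)
    then show "A $$ (?n, j) * cofactor A ?n j = v j * cof xs j"
      unfolding cofactor_def cof_def A_def using j by simp
  qed
  finally show ?thesis .
qed

lemma sum_delta_mult: "k < (m::nat) \<Longrightarrow> (\<Sum>j<m. (if j = k then 1 else 0) * f j) = (f k::real)"
proof -
  assume "k < m"
  have "(\<Sum>j<m. (if j = k then 1 else 0) * f j) = (\<Sum>j<m. if j = k then f j else 0)"
    by (rule sum.cong) auto
  also have "\<dots> = f k" using \<open>k < m\<close> by (subst sum.delta) auto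
  finally show ?thesis .
qed

definition uv :: "nat \<Rightarrow> nat \<Rightarrow> real" where "uv i = (\<lambda>j. if j = i then 1 else 0)"
definition sh :: "(nat \<Rightarrow> real) \<Rightarrow> nat \<Rightarrow> real" where "sh v = (\<lambda>j. v (Suc j))"

lemma Dl_unit_last: "Dl (xs @ [uv (length xs)]) = Dl xs"
proof -
  have "Dl (xs @ [uv (length xs)]) = cof xs (length xs)"
    unfolding Dl_last uv_def by (rule sum_delta_mult) simp
  also have "\<dots> = Dl xs" unfolding cof_def Dl_def
    by (simp add: power_add[symmetric] mult_2[symmetric], intro arg_cong[of _ _ det] eq_matI, auto)
  finally show ?thesis .
qed

lemma Dl_unit0: "Dl (xs @ [uv 0]) = (-1)^(length xs) * Dl (map sh xs)"
proof -
  have "Dl (xs @ [uv 0]) = cof xs 0"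
    unfolding Dl_last uv_def by (rule sum_delta_mult) simp
  also have "\<dots> = (-1)^(length xs) * Dl (map sh xs)" unfolding cof_def Dl_def sh_def
    by (simp, intro arg_cong[of _ _ det] eq_matI, auto)
  finally show ?thesis .
qed

lemma Dl_last_scale: "Dl (xs @ [\<lambda>j. c * v j]) = c * Dl (xs @ [v])"
  unfolding Dl_last by (subst sum_distrib_left) (simp add: mult_ac del: sum.lessThan_Suc)

lemma Dl_rep: assumes "i < j" "j < length xs" "xs ! i = xs ! j" shows "Dl xs = 0"
  unfolding Dl_def
  by (rule det_identical_rows[of _ "length xs" i j]) (use assms in auto)

lemma Dl_perm: assumes p: "p permutes {0..<length xs}"
  shows "Dl (map (\<lambda>i. xs ! p i) [0..<length xs]) = signof p * Dl xs"
proof -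
  have "Dl (map (\<lambda>i. xs ! p i) [0..<length xs]) =
     det (mat (length xs) (length xs) (\<lambda>(i,j). mat (length xs) (length xs) (\<lambda>(i,j). (xs ! i) j) $$ (p i, j)))"
    unfolding Dl_def using permutes_in_image[OF p]
    by (intro arg_cong[of _ _ det] eq_matI) auto
  also have "\<dots> = signof p * Dl xs" unfolding Dl_def
    by (rule det_permute_rows[OF _ p]) simp
  finally show ?thesis .
qed

lemma Dl_swap: "Dl (pre @ a # b # post) = - Dl (pre @ b # a # post)"
proof -
  let ?xs = "pre @ b # a # post"
  let ?k = "length pre"
  let ?p = "Transposition.transpose ?k (Suc ?k)"
  have p: "?p permutes {0..<length ?xs}" by (rule permutes_swap_id) auto
  have e: "map (\<lambda>i. ?xs ! ?p i) [0..<length ?xs] = pre @ a # b # post"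
  proof (rule nth_equalityI)
    fix i assume i: "i < length (map (\<lambda>i. ?xs ! ?p i) [0..<length ?xs])"
    have m: "map (\<lambda>i. ?xs ! ?p i) [0..<length ?xs] ! i = ?xs ! ?p i" using i by (simp del: upt_Suc)
    consider "i < ?k" | "i = ?k" | "i = Suc ?k" | "i > Suc ?k" by linarith
    then show "map (\<lambda>i. ?xs ! ?p i) [0..<length ?xs] ! i = (pre @ a # b # post) ! i"
    proof cases
      case 4
      then obtain d where d: "i = length pre + Suc (Suc d)" by (metis less_iff_Suc_add add_Suc_right add_Suc add.commute)
      have pi: "?p i = i" using 4 by (simp add: transpose_def)
      have "?xs ! i = post ! d" unfolding d nth_append_length_plus by simp
      also have "\<dots> = (pre @ a # b # post) ! i" unfolding d nth_append_length_plus by simp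
      finally show ?thesis using m pi by simp
    next
      case 1
      then have pi: "?p i = i" by (simp add: transpose_def)
      show ?thesis using m pi 1 by (simp add: nth_append)
    next
      case 2
      then have pi: "?p i = Suc ?k" by (simp add: transpose_def)
      show ?thesis using m pi 2 by (simp add: nth_append)
    next
      case 3
      then have pi: "?p i = ?k" by (simp add: transpose_def)
      show ?thesis using m pi 3 by (simp add: nth_append)
    qed
  qed simp
  have "signof ?p = (-1::real)" by (simp add: sign_swap_id)
  with Dl_perm[OF p] e show ?thesis by simp
qed


lemma Dl_move: "Dl (pre @ x # A @ post) = (-1)^(length A) * Dl (pre @ A @ x # post)"
proof (induction A arbitrary: pre)
  case Nil then show ?case by simp
next
  case (Cons y A)
  have "Dl (pre @ x # (y # A) @ post) = - Dl (pre @ y # x # A @ post)"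
    using Dl_swap[of pre x y "A @ post"] by simp
  also have "pre @ y # x # A @ post = (pre @ [y]) @ x # A @ post" by simp
  also have "Dl \<dots> = (-1)^(length A) * Dl ((pre @ [y]) @ A @ x # post)" by (rule Cons.IH)
  finally show ?case by simp
qed

lemma Dl_scale: "Dl (map (\<lambda>r j. c r * f r j) xs) = prod_list (map c xs) * Dl (map f xs)"
proof -
  let ?n = "length xs"
  have A: "mat ?n ?n (\<lambda>(i,j). (map (\<lambda>r j. c r * f r j) xs ! i) j) \<in> carrier_mat ?n ?n" by simp
  have B: "mat ?n ?n (\<lambda>(i,j). (map f xs ! i) j) \<in> carrier_mat ?n ?n" by simp
  have "Dl (map (\<lambda>r j. c r * f r j) xs) = (\<Sum>p\<in>{p. p permutes {0..<?n}}.
      signof p * (\<Prod>i = 0..<?n. c (xs!i) * f (xs ! i) (p i)))"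
    unfolding Dl_def length_map det_def'[OF A]
    by (intro sum.cong refl arg_cong[of _ _ "\<lambda>x. _ * x"] prod.cong) (auto dest: permutes_in_image)
  also have "\<dots> = (\<Prod>i = 0..<?n. c (xs!i)) * (\<Sum>p\<in>{p. p permutes {0..<?n}}.
      signof p * (\<Prod>i = 0..<?n. f (xs ! i) (p i)))"
    by (simp add: sum_distrib_left prod.distrib mult_ac)
  also have "(\<Sum>p\<in>{p. p permutes {0..<?n}}. signof p * (\<Prod>i = 0..<?n. f (xs ! i) (p i))) = Dl (map f xs)"
    unfolding Dl_def length_map det_def'[OF B]
    by (intro sum.cong refl arg_cong[of _ _ "\<lambda>x. _ * x"] prod.cong) (auto dest: permutes_in_image)
  also have "(\<Prod>i = 0..<?n. c (xs!i)) = prod_list (map c xs)"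
    by (simp add: prod.list_conv_set_nth)
  finally show ?thesis .
qed

lemma vec_scalar: "vec n f \<bullet> vec n g = (\<Sum>j<n. f j * g j)"
  unfolding scalar_prod_def by (auto simp: atLeast0LessThan intro!: sum.cong)

lemma Dl_kernel:
  assumes nz: "Dl R \<noteq> 0" and h: "\<And>i. i < length R \<Longrightarrow> (\<Sum>j<length R. (R!i) j * \<phi> j) = 0"
    and j: "j < length R"
  shows "\<phi> j = 0"
proof -
  let ?m = "length R"
  define X where "X = mat ?m ?m (\<lambda>(i,j). (R ! i) j)"
  have X: "X \<in> carrier_mat ?m ?m" unfolding X_def by simp
  have d: "det X \<noteq> 0" using nz unfolding Dl_def X_def .
  define v where "v = vec ?m \<phi>"
  have "X *\<^sub>v v = 0\<^sub>v ?m"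
  proof (rule eq_vecI)
    fix i assume "i < dim_vec (0\<^sub>v ?m :: real vec)"
    then have i: "i < ?m" by simp
    have "(X *\<^sub>v v) $ i = (\<Sum>j<?m. (R!i) j * \<phi> j)"
      using i unfolding X_def v_def by (simp add: vec_scalar)
    then show "(X *\<^sub>v v) $ i = 0\<^sub>v ?m $ i" using h[OF i] i by simp
  qed (simp add: X_def)
  with det_0_iff_vec_prod_zero[OF X] d vec_carrier[of ?m \<phi>] have "v = 0\<^sub>v ?m" unfolding v_def by blast
  then have "v $ j = 0" using j by simp
  then show ?thesis using j unfolding v_def by simp
qed

lemma Dl_swap2: "Dl (A@[x,y]) = - Dl (A@[y,x])"
  using Dl_swap[of A x y "[]"] by simp

lemma Dl_rep2: "Dl (A@[x,x]) = 0"
  by (rule Dl_rep[of "length A" "Suc (length A)"]) (auto simp: nth_append)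

lemma Dl_repA: assumes "y \<in> set A" shows "Dl (A@[x,y]) = 0"
proof -
  obtain i where i: "i < length A" "A ! i = y" using assms by (auto simp: in_set_conv_nth)
  show ?thesis by (rule Dl_rep[of i "Suc (length A)"]) (use i in \<open>auto simp: nth_append\<close>)
qed

lemma pluecker:
  "Dl (A@[a,b]) * Dl (A@[c,d]) - Dl (A@[a,c]) * Dl (A@[b,d]) + Dl (A@[a,d]) * Dl (A@[b,c]) = 0"
proof -
  define m where "m = Suc (Suc (length A))"
  define \<phi> where "\<phi> j = Dl (A@[a,b]) * cof (A@[c]) j - Dl (A@[a,c]) * cof (A@[b]) j
      + Dl (A@[b,c]) * cof (A@[a]) j" for j
  define F where "F x = Dl (A@[a,b]) * Dl (A@[c,x]) - Dl (A@[a,c]) * Dl (A@[b,x])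
      + Dl (A@[b,c]) * Dl (A@[a,x])" for x
  have lin: "F x = (\<Sum>j<m. x j * \<phi> j)" for x
  proof -
    have 1: "Dl (A@[c,x]) = (\<Sum>j<m. x j * cof (A@[c]) j)"
      using Dl_last[of "A@[c]" x] unfolding m_def by simp
    have 2: "Dl (A@[b,x]) = (\<Sum>j<m. x j * cof (A@[b]) j)"
      using Dl_last[of "A@[b]" x] unfolding m_def by simp
    have 3: "Dl (A@[a,x]) = (\<Sum>j<m. x j * cof (A@[a]) j)"
      using Dl_last[of "A@[a]" x] unfolding m_def by simp
    show ?thesis unfolding F_def \<phi>_def 1 2 3
      by (simp add: sum_distrib_left sum_subtractf sum.distrib[symmetric] algebra_simps)
  qed
  have Fz: "F y = 0" if y: "y \<in> set A \<union> {a,b,c}" for y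
  proof -
    consider "y \<in> set A" | "y = a" | "y = b" | "y = c" using y by auto
    then show ?thesis
    proof cases
      case 1 then show ?thesis unfolding F_def by (simp add: Dl_repA)
    next
      case 2 then show ?thesis unfolding F_def
        using Dl_swap2[of A c a] Dl_swap2[of A b a] Dl_rep2[of A a] by simp
    next
      case 3 then show ?thesis unfolding F_def
        using Dl_swap2[of A c b] Dl_rep2[of A b] by simp
    next
      case 4 then show ?thesis unfolding F_def
        using Dl_rep2[of A c] by simp
    qed
  qed
  have key: "F x = 0" if R: "Dl R \<noteq> 0" "length R = m" "set R \<subseteq> set A \<union> {a,b,c}" for R x
  proof -
    have "\<phi> j = 0" if j: "j < m" for j
    proof (rule Dl_kernel[of R])
      show "Dl R \<noteq> 0" by fact
      show "j < length R" using j R by simp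
      fix i assume i: "i < length R"
      have "R ! i \<in> set A \<union> {a,b,c}" using R(3) i nth_mem by blast
      then show "(\<Sum>j<length R. (R!i) j * \<phi> j) = 0" using Fz[of "R!i"] lin[of "R!i"] R by simp
    qed
    then show ?thesis unfolding lin by simp
  qed
  have "F d = 0"
  proof (cases "Dl (A@[a,b]) \<noteq> 0")
    case True then show ?thesis by (intro key[of "A@[a,b]"]) (auto simp: m_def)
  next
    case f1: False
    show ?thesis
    proof (cases "Dl (A@[a,c]) \<noteq> 0")
      case True then show ?thesis by (intro key[of "A@[a,c]"]) (auto simp: m_def)
    next
      case f2: False
      show ?thesis
      proof (cases "Dl (A@[b,c]) \<noteq> 0")
        case True then show ?thesis by (intro key[of "A@[b,c]"]) (auto simp: m_def)
      next
        case False then show ?thesis using f1 f2 unfolding F_def by simp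
      qed
    qed
  qed
  then show ?thesis unfolding F_def by (simp add: mult.commute)
qed

definition sp :: "real \<Rightarrow> nat \<Rightarrow> real" where "sp \<sigma> = (\<lambda>j. \<sigma> ^ j)"

lemma sum_bidiag:
  assumes "j < (m::nat)"
  shows "(\<Sum>l<m. (g l::real) * (if l = j then 1 else if Suc l = j then -\<sigma> else 0)) =
    (if j = 0 then g 0 else g j - \<sigma> * g (j - 1))"
proof -
  have "(\<Sum>l<m. g l * (if l = j then 1 else if Suc l = j then -\<sigma> else 0)) =
        (\<Sum>l<m. (if l = j then g l else 0)) + (\<Sum>l<m. (if Suc l = j then -\<sigma> * g l else 0))"
    by (subst sum.distrib[symmetric]) (rule sum.cong, auto)
  also have "(\<Sum>l<m. (if l = j then g l else 0)) = g j" using assms by (subst sum.delta) auto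
  also have "(\<Sum>l<m. (if Suc l = j then -\<sigma> * g l else 0)) = (if j = 0 then 0 else - \<sigma> * g (j - 1))"
  proof (cases j)
    case 0 then show ?thesis by simp
  next
    case (Suc j')
    have "(\<Sum>l<m. (if Suc l = j then -\<sigma> * g l else 0)) = (\<Sum>l<m. (if l = j' then -\<sigma> * g l else 0))"
      using Suc by (intro sum.cong) auto
    also have "\<dots> = -\<sigma> * g j'" using assms Suc by (subst sum.delta) auto
    finally show ?thesis using Suc by simp
  qed
  finally show ?thesis by auto
qed

lemma Dl_border: "Dl (xs @ [sp \<sigma>]) = (-1)^(length xs) * Dl (map (\<lambda>v j. v (Suc j) - \<sigma> * v j) xs)"
proof -
  let ?n = "length xs"
  define X where "X = mat (Suc ?n) (Suc ?n) (\<lambda>(i,j). ((xs @ [sp \<sigma>]) ! i) j)"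
  define U where "U = mat (Suc ?n) (Suc ?n) (\<lambda>(i,j). if i = j then 1 else if Suc i = j then -\<sigma> else (0::real))"
  define ys where "ys = map (\<lambda>v j. if j = 0 then v 0 else v j - \<sigma> * v (j - 1)) xs @ [uv 0]"
  have X: "X \<in> carrier_mat (Suc ?n) (Suc ?n)" unfolding X_def by simp
  have U: "U \<in> carrier_mat (Suc ?n) (Suc ?n)" unfolding U_def by simp
  have ut: "upper_triangular U" unfolding U_def upper_triangular_def by auto
  have dU: "det U = 1"
    by (subst det_upper_triangular[OF ut U], unfold prod_list_diag_prod, rule prod.neutral) (simp add: U_def)
  have XU: "X * U = mat (Suc ?n) (Suc ?n) (\<lambda>(i,j). (ys ! i) j)"
  proof (rule eq_matI)
    fix i j assume i: "i < dim_row (mat (Suc ?n) (Suc ?n) (\<lambda>(i,j). (ys ! i) j))"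
      and j: "j < dim_col (mat (Suc ?n) (Suc ?n) (\<lambda>(i,j). (ys ! i) j))"
    then have i: "i < Suc ?n" and j: "j < Suc ?n" by auto
    have "(X * U) $$ (i,j) = (\<Sum>l<Suc ?n. ((xs @ [sp \<sigma>]) ! i) l *
        (if l = j then 1 else if Suc l = j then -\<sigma> else 0))"
      using i j unfolding X_def U_def by (simp add: vec_scalar del: sum.lessThan_Suc)
    also have "\<dots> = (if j = 0 then ((xs @ [sp \<sigma>]) ! i) 0 else ((xs @ [sp \<sigma>]) ! i) j - \<sigma> * ((xs @ [sp \<sigma>]) ! i) (j - 1))"
      by (rule sum_bidiag[OF j])
    also have "\<dots> = (ys ! i) j"
    proof (cases "i < ?n")
      case True then show ?thesis unfolding ys_def by (simp add: nth_append)
    next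
      case False
      then have "i = ?n" using i by simp
      then show ?thesis unfolding ys_def sp_def uv_def
        by (cases j) (auto simp: nth_append)
    qed
    finally show "(X * U) $$ (i,j) = mat (Suc ?n) (Suc ?n) (\<lambda>(i,j). (ys ! i) j) $$ (i,j)"
      using i j by simp
  qed (auto simp: X_def U_def)
  have "Dl (xs @ [sp \<sigma>]) = det X" unfolding Dl_def X_def by simp
  also have "\<dots> = det (X * U)" using det_mult[OF X U] dU by simp
  also have "\<dots> = Dl ys" unfolding XU Dl_def ys_def by simp
  also have "\<dots> = (-1)^(length xs) * Dl (map (\<lambda>v j. v (Suc j) - \<sigma> * v j) xs)"
    unfolding ys_def Dl_unit0 by (simp add: sh_def o_def)
  finally show ?thesis .
qed


lemma Dl_leibniz: "Dl (map g [0..<n]) = (\<Sum>p\<in>{p. p permutes {0..<n}}. signof p * (\<Prod>i=0..<n. g i (p i)))"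
proof -
  have A: "mat n n (\<lambda>(i,j). g i j) \<in> carrier_mat n n" by simp
  have "Dl (map g [0..<n]) = det (mat n n (\<lambda>(i,j). g i j))"
    unfolding Dl_def by (intro arg_cong[of _ _ det] eq_matI) auto
  also have "\<dots> = (\<Sum>p\<in>{p. p permutes {0..<n}}. signof p * (\<Prod>i=0..<n. g i (p i)))"
    unfolding det_def'[OF A]
    by (intro sum.cong refl arg_cong[of _ _ "\<lambda>x. _ * x"] prod.cong) (auto dest: permutes_in_image)
  finally show ?thesis .
qed

lemma Dl_transp_leibniz:
  assumes "length s = n"
  shows "Dl (map a s) = (\<Sum>p\<in>{p. p permutes {0..<n}}. signof p * (\<Prod>i=0..<n. a (s ! (p i)) i))"
proof -
  have A: "mat n n (\<lambda>(i,j). a (s ! j) i) \<in> carrier_mat n n" by simp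
  have "Dl (map a s) = det (transpose_mat (mat n n (\<lambda>(i,j). a (s ! j) i)))"
    unfolding Dl_def using assms by (intro arg_cong[of _ _ det] eq_matI) auto
  also have "\<dots> = det (mat n n (\<lambda>(i,j). a (s ! j) i))" by (rule det_transpose[OF A])
  also have "\<dots> = (\<Sum>p\<in>{p. p permutes {0..<n}}. signof p * (\<Prod>i=0..<n. a (s ! (p i)) i))"
    unfolding det_def'[OF A]
    by (intro sum.cong refl arg_cong[of _ _ "\<lambda>x. _ * x"] prod.cong) (auto dest: permutes_in_image)
  finally show ?thesis .
qed

lemma cauchy_binet:
  fixes a b :: "nat \<Rightarrow> nat \<Rightarrow> real"
  shows "det (mat n n (\<lambda>(i,j). \<Sum>r<N. a r i * b r j)) =
     (\<Sum>S\<in>{S. S \<subseteq> {..<N} \<and> card S = n}.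
        Dl (map a (sorted_list_of_set S)) * Dl (map b (sorted_list_of_set S)))"
proof -
  define G where "G f = (\<Prod>i=0..<n. a (f i) i) * Dl (map (\<lambda>i. b (f i)) [0..<n])" for f
  define F where "F = PiE {0..<n} (\<lambda>_. {..<N})"
  define Fi where "Fi = {f \<in> F. inj_on f {0..<n}}"
  define Subs where "Subs = {S. S \<subseteq> {..<N} \<and> card S = n}"
  define Perms where "Perms = {p. p permutes {0..<n}}"
  define ss where "ss S = sorted_list_of_set S" for S :: "nat set"
  define h where "h = (\<lambda>(S,p). restrict (\<lambda>i. ss S ! p i) {0..<n})"
  have finF: "finite F" unfolding F_def by (intro finite_PiE) auto
  have finSubs: "finite Subs" unfolding Subs_def
    by (rule finite_subset[of _ "Pow {..<N}"]) auto
  have finPerms: "finite Perms" unfolding Perms_def by (rule finite_permutations) simp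
  have SS: "finite S" "distinct (ss S)" "set (ss S) = S" "length (ss S) = n" if "S \<in> Subs" for S
  proof -
    show fS: "finite S" using that unfolding Subs_def by (auto intro: finite_subset)
    show "distinct (ss S)" "set (ss S) = S" unfolding ss_def using fS by auto
    show "length (ss S) = n" unfolding ss_def using fS that unfolding Subs_def by simp
  qed
  have Gcong: "G f = G g" if "\<And>i. i < n \<Longrightarrow> f i = g i" for f g
    unfolding G_def using that by (intro arg_cong2[of _ _ _ _ "(*)"] prod.cong arg_cong[of _ _ Dl] map_cong) auto
  have step1: "det (mat n n (\<lambda>(i,j). \<Sum>r<N. a r i * b r j)) = (\<Sum>f\<in>F. G f)"
  proof -
    have "det (mat n n (\<lambda>(i,j). \<Sum>r<N. a r i * b r j)) =
        Dl (map (\<lambda>i j. \<Sum>r<N. a r i * b r j) [0..<n])"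
      unfolding Dl_def by (intro arg_cong[of _ _ det] eq_matI) auto
    also have "\<dots> = (\<Sum>p\<in>Perms. signof p * (\<Prod>i=0..<n. \<Sum>r<N. a r i * b r (p i)))"
      unfolding Dl_leibniz Perms_def ..
    also have "\<dots> = (\<Sum>p\<in>Perms. signof p * (\<Sum>f\<in>F. \<Prod>i=0..<n. a (f i) i * b (f i) (p i)))"
      unfolding F_def by (subst prod_sum_PiE) auto
    also have "\<dots> = (\<Sum>p\<in>Perms. \<Sum>f\<in>F. signof p * (\<Prod>i=0..<n. a (f i) i * b (f i) (p i)))"
      by (simp add: sum_distrib_left)
    also have "\<dots> = (\<Sum>f\<in>F. \<Sum>p\<in>Perms. signof p * (\<Prod>i=0..<n. a (f i) i * b (f i) (p i)))"
      by (rule sum.swap)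
    also have "\<dots> = (\<Sum>f\<in>F. G f)"
      unfolding G_def Dl_leibniz Perms_def
      by (intro sum.cong refl) (simp add: sum_distrib_left prod.distrib mult_ac)
    finally show ?thesis .
  qed
  have step2: "(\<Sum>f\<in>F. G f) = (\<Sum>f\<in>Fi. G f)"
  proof (rule sum.mono_neutral_right[OF finF])
    show "Fi \<subseteq> F" unfolding Fi_def by auto
    show "\<forall>f\<in>F - Fi. G f = 0"
    proof
      fix f assume "f \<in> F - Fi"
      then have "\<not> inj_on f {0..<n}" unfolding Fi_def by auto
      then obtain i j where ij: "i < n" "j < n" "i \<noteq> j" "f i = f j" unfolding inj_on_def by auto
      have "Dl (map (\<lambda>i. b (f i)) [0..<n]) = 0"
      proof (cases "i < j")
        case True then show ?thesis by (intro Dl_rep[of i j]) (use ij in auto)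
      next
        case False then show ?thesis by (intro Dl_rep[of j i]) (use ij in auto)
      qed
      then show "G f = 0" unfolding G_def by simp
    qed
  qed
  have bij: "bij_betw h (Sigma Subs (\<lambda>_. Perms)) Fi"
    unfolding bij_betw_def
  proof
    have img: "h (S,p) ` {0..<n} = S" if "S \<in> Subs" "p \<in> Perms" for S p
    proof -
      have "h (S,p) ` {0..<n} = (\<lambda>i. ss S ! i) ` (p ` {0..<n})" unfolding h_def by auto
      also have "p ` {0..<n} = {0..<n}" using that unfolding Perms_def by (simp add: permutes_image)
      also have "(\<lambda>i. ss S ! i) ` {0..<n} = set (ss S)"
      proof -
        have "(!) (ss S) ` {..<length (ss S)} = set (ss S)"
          by (rule bij_betw_imp_surj_on[OF bij_betw_nth]) (use SS[OF that(1)] in auto)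
        then show ?thesis using SS[OF that(1)] by (simp add: atLeast0LessThan)
      qed
      finally show ?thesis using SS[OF that(1)] by simp
    qed
    show "inj_on h (Sigma Subs (\<lambda>_. Perms))"
    proof (rule inj_onI)
      fix x y assume x: "x \<in> Sigma Subs (\<lambda>_. Perms)" and y: "y \<in> Sigma Subs (\<lambda>_. Perms)"
        and e: "h x = h y"
      obtain S p where xx: "x = (S,p)" "S \<in> Subs" "p \<in> Perms" using x by auto
      obtain S' p' where yy: "y = (S',p')" "S' \<in> Subs" "p' \<in> Perms" using y by auto
      have "S = S'" using img[OF xx(2,3)] img[OF yy(2,3)] e xx yy by metis
      have "p i = p' i" for i
      proof (cases "i < n")
        case True
        have "h x i = h y i" using e by simp
        then have "ss S ! p i = ss S ! p' i" using True \<open>S = S'\<close> unfolding xx yy h_def by simp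
        moreover have "p i < n" "p' i < n" using True xx yy unfolding Perms_def
          by (auto dest: permutes_in_image)
        ultimately show ?thesis using SS[OF xx(2)] by (simp add: nth_eq_iff_index_eq)
      next
        case False
        then show ?thesis using xx yy unfolding Perms_def by (simp add: permutes_def)
      qed
      then show "x = y" using xx yy \<open>S = S'\<close> by auto
    qed
    show "h ` Sigma Subs (\<lambda>_. Perms) = Fi"
    proof
      show "h ` Sigma Subs (\<lambda>_. Perms) \<subseteq> Fi"
      proof
        fix f assume "f \<in> h ` Sigma Subs (\<lambda>_. Perms)"
        then obtain S p where f: "f = h (S,p)" and S: "S \<in> Subs" and p: "p \<in> Perms" by auto
        have pn: "p i < n" if "i < n" for i using p that unfolding Perms_def by (auto dest: permutes_in_image)
        have mem: "ss S ! p i \<in> {..<N}" if "i \<in> {0..<n}" for i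
        proof -
          have "ss S ! p i \<in> S" using pn SS[OF S] that by auto
          then show ?thesis using S unfolding Subs_def by auto
        qed
        have "f \<in> F" unfolding F_def f h_def prod.case restrict_PiE_iff using mem by blast
        moreover have "inj_on f {0..<n}"
        proof (rule inj_onI)
          fix i j assume i: "i \<in> {0..<n}" and j: "j \<in> {0..<n}" and e: "f i = f j"
          then have "ss S ! p i = ss S ! p j" unfolding f h_def by simp
          then have "p i = p j" using nth_eq_iff_index_eq[of "ss S" "p i" "p j"] pn i j SS[OF S] by auto
          moreover have "p permutes {0..<n}" using p unfolding Perms_def by simp
          ultimately show "i = j" using permutes_inj injD by metis
        qed
        ultimately show "f \<in> Fi" unfolding Fi_def by simp
      qed
      show "Fi \<subseteq> h ` Sigma Subs (\<lambda>_. Perms)"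
      proof
        fix f assume f: "f \<in> Fi"
        define S where "S = f ` {0..<n}"
        have inj: "inj_on f {0..<n}" using f unfolding Fi_def by simp
        have fF: "f \<in> F" using f unfolding Fi_def by simp
        have S: "S \<in> Subs" unfolding Subs_def S_def using fF inj
          by (auto simp: F_def card_image)
        define q where "q = inv_into {..<n} ((!) (ss S))"
        have bn: "bij_betw ((!) (ss S)) {..<n} S"
          by (rule bij_betw_nth) (use SS[OF S] in auto)
        have bq: "bij_betw q S {..<n}" unfolding q_def by (rule bij_betw_inv_into[OF bn])
        have bf: "bij_betw f {0..<n} S" unfolding S_def by (rule bij_betw_imageI[OF inj refl])
        define p where "p i = (if i \<in> {0..<n} then q (f i) else i)" for i
        have bp: "bij_betw p {0..<n} {0..<n}"
        proof -
          have "bij_betw (q \<circ> f) {0..<n} {..<n}" by (rule bij_betw_trans[OF bf bq])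
          then have "bij_betw (q \<circ> f) {0..<n} {0..<n}" by (simp add: atLeast0LessThan)
          then show ?thesis by (rule bij_betw_cong[THEN iffD1, rotated]) (simp add: p_def)
        qed
        have pP: "p \<in> Perms" unfolding Perms_def mem_Collect_eq by (rule bij_imp_permutes[OF bp]) (simp add: p_def)
        have "h (S,p) = f"
        proof
          fix i show "h (S,p) i = f i"
          proof (cases "i < n")
            case True
            then have "f i \<in> S" unfolding S_def by auto
            then have "ss S ! q (f i) = f i" unfolding q_def
              using bn by (simp add: bij_betw_def f_inv_into_f)
            then show ?thesis using True unfolding h_def p_def by simp
          next
            case False
            then show ?thesis using fF unfolding h_def F_def by (auto simp: PiE_def extensional_def)
          qed
        qed
        then show "f \<in> h ` Sigma Subs (\<lambda>_. Perms)" using S pP by force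
      qed
    qed
  qed
  have step3: "(\<Sum>f\<in>Fi. G f) = (\<Sum>x\<in>Sigma Subs (\<lambda>_. Perms). G (h x))"
    by (rule sum.reindex_bij_betw[OF bij, symmetric])
  also have "\<dots> = (\<Sum>S\<in>Subs. \<Sum>p\<in>Perms. G (h (S,p)))"
  proof -
    have "(\<Sum>x\<in>Sigma Subs (\<lambda>_. Perms). G (h x)) = (\<Sum>(S,p)\<in>Sigma Subs (\<lambda>_. Perms). G (h (S,p)))"
      by (rule sum.cong[OF refl]) (auto split: prod.split)
    also have "\<dots> = (\<Sum>S\<in>Subs. \<Sum>p\<in>Perms. G (h (S,p)))"
      by (rule sum.Sigma[symmetric]) (use finSubs finPerms in auto)
    finally show ?thesis .
  qed
  also have "\<dots> = (\<Sum>S\<in>Subs. Dl (map a (ss S)) * Dl (map b (ss S)))"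
  proof (rule sum.cong[OF refl])
    fix S assume S: "S \<in> Subs"
    have "(\<Sum>p\<in>Perms. G (h (S,p))) = (\<Sum>p\<in>Perms. G (\<lambda>i. ss S ! p i))"
      by (intro sum.cong refl Gcong) (simp add: h_def)
    also have "\<dots> = (\<Sum>p\<in>Perms. (\<Prod>i=0..<n. a (ss S ! p i) i) * (signof p * Dl (map b (ss S))))"
    proof (rule sum.cong[OF refl])
      fix p assume p: "p \<in> Perms"
      have e: "map (\<lambda>i. b (ss S ! p i)) [0..<n] = map (\<lambda>i. map b (ss S) ! p i) [0..<length (map b (ss S))]"
        using SS[OF S] p unfolding Perms_def by (auto dest: permutes_in_image)
      have pp: "p permutes {0..<length (map b (ss S))}" using p SS[OF S] unfolding Perms_def by simp
      have "Dl (map (\<lambda>i. b (ss S ! p i)) [0..<n]) = signof p * Dl (map b (ss S))"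
        unfolding e by (rule Dl_perm[OF pp])
      then show "G (\<lambda>i. ss S ! p i) = (\<Prod>i=0..<n. a (ss S ! p i) i) * (signof p * Dl (map b (ss S)))"
        unfolding G_def by simp
    qed
    also have "\<dots> = Dl (map a (ss S)) * Dl (map b (ss S))"
      unfolding Dl_transp_leibniz[OF SS(4)[OF S]] Perms_def sum_distrib_right
      by (intro sum.cong refl) (simp only: ac_simps)
    finally show "(\<Sum>p\<in>Perms. G (h (S,p))) = Dl (map a (ss S)) * Dl (map b (ss S))" .
  qed
  finally have "(\<Sum>f\<in>Fi. G f) = (\<Sum>S\<in>Subs. Dl (map a (ss S)) * Dl (map b (ss S)))" .
  then show ?thesis unfolding step1 step2 Subs_def ss_def .
qed


lemma Dl_single: "Dl [v] = v 0"
proof -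
  have "Dl ([] @ [v]) = v 0 * cof [] 0" unfolding Dl_last by simp
  also have "cof [] 0 = 1" unfolding cof_def by simp
  finally show ?thesis by simp
qed

lemma Dl_Nil: "Dl [] = 1" unfolding Dl_def by simp

lemma cas_rec:
  "Dl (map \<phi> (p@[a,b])) * Dl (map (sh \<circ> \<phi>) p) =
   Dl (map \<phi> (p@[a])) * Dl (map (sh \<circ> \<phi>) (p@[b])) - Dl (map (sh \<circ> \<phi>) (p@[a])) * Dl (map \<phi> (p@[b]))"
proof -
  let ?A = "map \<phi> p"
  let ?n = "length p"
  have pl: "Dl (?A@[\<phi> a,\<phi> b]) * Dl (?A@[uv 0, uv (Suc ?n)]) - Dl (?A@[\<phi> a,uv 0]) * Dl (?A@[\<phi> b,uv (Suc ?n)])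
      + Dl (?A@[\<phi> a,uv (Suc ?n)]) * Dl (?A@[\<phi> b,uv 0]) = 0" by (rule pluecker)
  have cd: "Dl (?A@[uv 0, uv (Suc ?n)]) = (-1)^?n * Dl (map (sh \<circ> \<phi>) p)"
    using Dl_unit_last[of "?A@[uv 0]"] Dl_unit0[of ?A] by (simp add: map_map)
  have ac: "Dl (?A@[\<phi> a, uv 0]) = (-1)^Suc ?n * Dl (map (sh \<circ> \<phi>) (p@[a]))"
    using Dl_unit0[of "?A@[\<phi> a]"] by (simp add: map_map)
  have bc: "Dl (?A@[\<phi> b, uv 0]) = (-1)^Suc ?n * Dl (map (sh \<circ> \<phi>) (p@[b]))"
    using Dl_unit0[of "?A@[\<phi> b]"] by (simp add: map_map)
  have bd: "Dl (?A@[\<phi> b, uv (Suc ?n)]) = Dl (map \<phi> (p@[b]))"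
    using Dl_unit_last[of "?A@[\<phi> b]"] by simp
  have ad: "Dl (?A@[\<phi> a, uv (Suc ?n)]) = Dl (map \<phi> (p@[a]))"
    using Dl_unit_last[of "?A@[\<phi> a]"] by simp
  from pl[unfolded cd ac bc bd ad] have
    "(-1)^?n * (Dl (map \<phi> (p@[a,b])) * Dl (map (sh \<circ> \<phi>) p)
      - (Dl (map \<phi> (p@[a])) * Dl (map (sh \<circ> \<phi>) (p@[b])) - Dl (map (sh \<circ> \<phi>) (p@[a])) * Dl (map \<phi> (p@[b])))) = 0"
    by (simp add: algebra_simps)
  then show ?thesis by simp
qed

definition VP :: "real list \<Rightarrow> real" where
  "VP xs = (\<Prod>j<length xs. \<Prod>i<j. xs!j - xs!i)"

lemma VP_snoc: "VP (xs@[x]) = VP xs * (\<Prod>i<length xs. x - xs!i)"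
proof -
  have "VP (xs@[x]) = (\<Prod>j<length xs. \<Prod>i<j. (xs@[x])!j - (xs@[x])!i) * (\<Prod>i<length xs. x - (xs@[x])!i)"
    unfolding VP_def by (simp add: nth_append)
  also have "(\<Prod>j<length xs. \<Prod>i<j. (xs@[x])!j - (xs@[x])!i) = VP xs"
    unfolding VP_def by (intro prod.cong refl) (auto simp: nth_append)
  also have "(\<Prod>i<length xs. x - (xs@[x])!i) = (\<Prod>i<length xs. x - xs!i)"
    by (intro prod.cong refl) (auto simp: nth_append)
  finally show ?thesis .
qed

lemma VP_nz: "distinct xs \<Longrightarrow> VP xs \<noteq> 0"
  unfolding VP_def by (auto simp: nth_eq_iff_index_eq)

lemma two_snoc: "2 \<le> length q \<Longrightarrow> \<exists>p a b. q = p @ [a,b]"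
proof -
  assume "2 \<le> length q"
  then obtain q' b where "q = q' @ [b]" by (cases q rule: rev_cases) auto
  moreover with \<open>2 \<le> length q\<close> obtain p a where "q' = p @ [a]" by (cases q' rule: rev_cases) auto
  ultimately show ?thesis by auto
qed

lemma vander:
  assumes "distinct xs" "\<forall>x\<in>set xs. x \<noteq> 0"
  shows "Dl (map (\<lambda>x j. x^j) xs) = VP xs"
  using assms
proof (induction "length xs" arbitrary: xs rule: less_induct)
  case less
  show ?case
  proof (cases "length xs < 2")
    case True
    then consider "xs = []" | x where "xs = [x]"
      by (cases xs; cases "tl xs") auto
    then show ?thesis by cases (auto simp: Dl_Nil Dl_single VP_def)
  next
    case False
    then obtain p a b where xs: "xs = p @ [a,b]" using two_snoc by (meson not_less)
    let ?\<phi> = "\<lambda>x j. (x::real)^j"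
    have shp: "Dl (map (sh \<circ> ?\<phi>) q) = prod_list q * Dl (map ?\<phi> q)" for q
      using Dl_scale[of "\<lambda>x. x" "\<lambda>x j. x^j" q] by (simp add: sh_def o_def)
    have IH: "Dl (map ?\<phi> q) = VP q" if "q = p \<or> q = p@[a] \<or> q = p@[b]" for q
      using that less.prems xs by (intro less.hyps) auto
    have d: "distinct p" "a \<notin> set p" "b \<notin> set p" "a \<noteq> b" using less.prems xs by auto
    have nz: "prod_list p \<noteq> 0" using less.prems xs by (auto simp: prod_list_zero_iff)
    have vnz: "VP p \<noteq> 0" using VP_nz d by simp
    have "Dl (map ?\<phi> (p@[a,b])) * (prod_list p * VP p) =
        VP (p@[a]) * (prod_list (p@[b]) * VP (p@[b])) - prod_list (p@[a]) * VP (p@[a]) * VP (p@[b])"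
      using cas_rec[of ?\<phi> p a b] unfolding shp IH[OF disjI1[OF refl]] IH[OF disjI2[OF disjI1[OF refl]]]
        IH[OF disjI2[OF disjI2[OF refl]]] by simp
    also have "\<dots> = VP (p@[a,b]) * (prod_list p * VP p)"
    proof -
      define A where "A = (\<Prod>i<length p. a - p!i)"
      define B where "B = (\<Prod>i<length p. b - p!i)"
      have e1: "VP (p@[a]) = VP p * A" unfolding A_def by (rule VP_snoc)
      have e2: "VP (p@[b]) = VP p * B" unfolding B_def by (rule VP_snoc)
      have e3: "VP (p@[a,b]) = VP p * A * (b - a) * B"
        using VP_snoc[of "p@[a]" b] e1 unfolding B_def by (simp add: nth_append lessThan_Suc algebra_simps)
      have e4: "prod_list (p@[b]) = prod_list p * b" "prod_list (p@[a]) = prod_list p * a" by simp_all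
      show ?thesis unfolding e1 e2 e3 e4 by (simp add: algebra_simps)
    qed
    finally show ?thesis using nz vnz xs by simp
  qed
qed


locale hungry =
  fixes M N :: nat and z :: "nat \<Rightarrow> real" and s :: "int \<Rightarrow> real"
    and w :: "int \<Rightarrow> nat \<Rightarrow> real"
  assumes M_pos: "0 < M" and N_pos: "0 < N"
    and z0_pos: "0 < z 0"
    and z_incr: "\<And>i j. i < j \<Longrightarrow> j < N \<Longrightarrow> z i < z j"
    and s_less: "\<And>t. s t < z 0"
    and w_pos: "\<And>m r. r < N \<Longrightarrow> 0 < w m r"
    and w_per: "\<And>m r. w m r = w (m mod int M) r"
    and positivity: "\<And>m p a b. 0 \<le> m \<Longrightarrow> m < int M \<Longrightarrow>
        sorted_wrt (<) (p @ [a, b]) \<Longrightarrow> b < N \<Longrightarrow>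
        wseq w z M m (p @ [a]) * wseq w z M (m+1) (p @ [b]) * zroot M z b
        > wseq w z M (m+1) (p @ [a]) * wseq w z M m (p @ [b]) * zroot M z a"
begin

lemma z_pos: "r < N \<Longrightarrow> 0 < z r"
  using z0_pos z_incr[of 0 r] by (cases "r = 0") auto

lemma z_gt_s: "r < N \<Longrightarrow> s t < z r"
  using s_less[of t] z_incr[of 0 r] by (cases "r = 0") auto

lemma wrev_mod: "wrev w z M m l = wrev w z M (m mod int M) l"
proof (induction "length l" arbitrary: l m rule: less_induct)
  case less
  show ?case
  proof (cases l)
    case Nil then show ?thesis by simp
  next
    case (Cons b l')
    show ?thesis
    proof (cases l')
      case Nil then show ?thesis using Cons w_per by simp
    next
      case (Cons a p)
      have IHa: "wrev w z M x (a#p) = wrev w z M (x mod int M) (a#p)" for x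
        using less.hyps[of "a#p"] \<open>l = b # l'\<close> Cons by simp
      have IHb: "wrev w z M x (b#p) = wrev w z M (x mod int M) (b#p)" for x
        using less.hyps[of "b#p"] \<open>l = b # l'\<close> Cons by simp
      have e: "(m mod int M - 1) mod int M = (m - 1) mod int M" by (simp add: mod_diff_left_eq)
      have a1: "wrev w z M (m mod int M - 1) (a#p) = wrev w z M (m - 1) (a#p)"
        using IHa[of "m mod int M - 1"] IHa[of "m - 1"] e by simp
      have b1: "wrev w z M (m mod int M - 1) (b#p) = wrev w z M (m - 1) (b#p)"
        using IHb[of "m mod int M - 1"] IHb[of "m - 1"] e by simp
      have a2: "wrev w z M (m mod int M) (a#p) = wrev w z M m (a#p)"
        using IHa[of "m mod int M"] IHa[of m] by simp
      have b2: "wrev w z M (m mod int M) (b#p) = wrev w z M m (b#p)"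
        using IHb[of "m mod int M"] IHb[of m] by simp
      show ?thesis unfolding \<open>l = b # l'\<close> Cons wrev.simps a1 b1 a2 b2 ..
    qed
  qed
qed

lemma wseq_mod: "wseq w z M m q = wseq w z M (m mod int M) q"
  unfolding wseq_def by (rule wrev_mod)

lemma wseq_cong: "m mod int M = m' mod int M \<Longrightarrow> wseq w z M m q = wseq w z M m' q"
  using wseq_mod[of m q] wseq_mod[of m' q] by simp

lemma wseq_rec: "wseq w z M m (p@[a,b]) =
  (wseq w z M (m-1) (p@[a]) * wseq w z M m (p@[b]) * zroot M z b
   - wseq w z M m (p@[a]) * wseq w z M (m-1) (p@[b]) * zroot M z a) / wseq w z M (m-1) (p@[a])"
  unfolding wseq_def by simp

lemma wseq_single: "wseq w z M m [r] = w m r" unfolding wseq_def by simp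

lemma wseq_pos: "sorted_wrt (<) q \<Longrightarrow> q \<noteq> [] \<Longrightarrow> \<forall>x\<in>set q. x < N \<Longrightarrow> 0 < wseq w z M m q"
proof (induction "length q" arbitrary: q m rule: less_induct)
  case less
  show ?case
  proof (cases "length q < 2")
    case True
    then obtain r where "q = [r]" using less.prems by (cases q; cases "tl q") auto
    then show ?thesis using less.prems w_pos by (simp add: wseq_single)
  next
    case False
    then obtain p a b where q: "q = p @ [a,b]" using two_snoc by (meson not_less)
    define m' where "m' = (m - 1) mod int M"
    have m': "0 \<le> m'" "m' < int M" unfolding m'_def using M_pos by auto
    have bN: "b < N" using less.prems q by auto
    have P: "wseq w z M m' (p @ [a]) * wseq w z M (m'+1) (p @ [b]) * zroot M z b
        > wseq w z M (m'+1) (p @ [a]) * wseq w z M m' (p @ [b]) * zroot M z a"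
      using positivity[OF m' _ bN] less.prems q by simp
    have c1: "wseq w z M m' x = wseq w z M (m-1) x" for x
      by (rule wseq_cong) (simp add: m'_def)
    have c2: "wseq w z M (m'+1) x = wseq w z M m x" for x
      by (rule wseq_cong) (simp add: m'_def mod_add_left_eq)
    have den: "0 < wseq w z M (m-1) (p@[a])"
      using less.prems q by (intro less.hyps) (auto simp: sorted_wrt_append)
    show ?thesis unfolding q wseq_rec using P den unfolding c1 c2 by simp
  qed
qed

definition psi :: "nat \<Rightarrow> int \<Rightarrow> real" where
  "psi r m = w m r * z r powr (real_of_int m / real M)"

definition Om :: "int \<Rightarrow> nat list \<Rightarrow> real" where
  "Om k q = (\<Prod>j<length q. wseq w z M (k + int j) (take (Suc j) q))"

definition Zk :: "int \<Rightarrow> nat list \<Rightarrow> real" where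
  "Zk k q = (\<Prod>j<length q. z (q!j) powr (real_of_int k / real M))"

lemma Om_snoc: "Om k (p@[x]) = Om k p * wseq w z M (k + int (length p)) (p@[x])"
  unfolding Om_def length_append_singleton prod.lessThan_Suc
  by (rule arg_cong2[where f="(*)"]) (auto intro!: prod.cong)

lemma Zk_snoc: "Zk k (p@[x]) = Zk k p * z x powr (real_of_int k / real M)"
  unfolding Zk_def length_append_singleton prod.lessThan_Suc
  by (rule arg_cong2[where f="(*)"]) (auto intro!: prod.cong simp: nth_append)

lemma Om_pos: "sorted_wrt (<) q \<Longrightarrow> \<forall>x\<in>set q. x < N \<Longrightarrow> 0 < Om k q"
  unfolding Om_def
proof (rule prod_pos)
  fix j assume "sorted_wrt (<) q" "\<forall>x\<in>set q. x < N" "j \<in> {..<length q}"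
  then show "0 < wseq w z M (k + int j) (take (Suc j) q)"
    by (intro wseq_pos) (auto simp: sorted_wrt_take dest: in_set_takeD)
qed

lemma Zk_pos: "\<forall>x\<in>set q. x < N \<Longrightarrow> 0 < Zk k q"
  unfolding Zk_def
proof (rule prod_pos)
  fix j assume "\<forall>x\<in>set q. x < N" "j \<in> {..<length q}"
  then have "q ! j < N" by auto
  then show "0 < z (q ! j) powr (real_of_int k / real M)" using z_pos[of "q!j"] by simp
qed

lemma zroot_eq: "r < N \<Longrightarrow> zroot M z r = z r powr (1 / real M)"
  unfolding zroot_def using root_powr_inverse[of M "z r"] M_pos z_pos[of r] by simp

lemma casorati:
  "sorted_wrt (<) q \<Longrightarrow> \<forall>x\<in>set q. x < N \<Longrightarrow>
   Dl (map (\<lambda>r i. psi r (k + int i)) q) = Om k q * Zk k q"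
proof (induction "length q" arbitrary: q k rule: less_induct)
  case less
  show ?case
  proof (cases "length q < 2")
    case True
    then consider "q = []" | r where "q = [r]" by (cases q; cases "tl q") auto
    then show ?thesis
      by cases (simp_all add: Dl_Nil Dl_single Om_def Zk_def psi_def wseq_single)
  next
    case False
    then obtain p a b where q: "q = p @ [a,b]" using two_snoc by (meson not_less)
    let ?n = "length p"
    define \<phi> where "\<phi> k' r = (\<lambda>i. psi r (k' + int i))" for k' r
    have sh\<phi>: "sh \<circ> \<phi> k' = \<phi> (k'+1)" for k'
      unfolding \<phi>_def sh_def by (auto simp: algebra_simps)
    have sp: "sorted_wrt (<) p" "sorted_wrt (<) (p@[a])" "sorted_wrt (<) (p@[b])"
      using less.prems q by (auto simp: sorted_wrt_append)
    have bd: "\<forall>x\<in>set p. x < N" "\<forall>x\<in>set (p@[a]). x < N" "\<forall>x\<in>set (p@[b]). x < N"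
      "a < N" "b < N" using less.prems q by auto
    have IH0: "Dl (map (\<phi> k') q') = Om k' q' * Zk k' q'"
      if "q' = p \<or> q' = p@[a] \<or> q' = p@[b]" for k' q'
      unfolding \<phi>_def using that less.prems q sp bd by (intro less.hyps) auto
    have IHp: "Dl (map (\<phi> k') p) = Om k' p * Zk k' p" for k' using IH0 by blast
    have IHa: "Dl (map (\<phi> k') (p@[a])) = Om k' (p@[a]) * Zk k' (p@[a])" for k' using IH0 by blast
    have IHb: "Dl (map (\<phi> k') (p@[b])) = Om k' (p@[b]) * Zk k' (p@[b])" for k' using IH0 by blast
    have rec: "Dl (map (\<phi> k) (p@[a,b])) * Dl (map (\<phi> (k+1)) p) =
       Dl (map (\<phi> k) (p@[a])) * Dl (map (\<phi> (k+1)) (p@[b])) - Dl (map (\<phi> (k+1)) (p@[a])) * Dl (map (\<phi> k) (p@[b]))"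
      using cas_rec[of "\<phi> k" p a b] unfolding sh\<phi> .
    define X where "X = Om k p"
    define Xp where "Xp = Om (k+1) p"
    define Z where "Z = Zk k p"
    define Y where "Y = Zk (k+1) p"
    define W1 where "W1 = wseq w z M (k + int ?n) (p@[a])"
    define W2 where "W2 = wseq w z M (k + int ?n + 1) (p@[a])"
    define V1 where "V1 = wseq w z M (k + int ?n) (p@[b])"
    define V2 where "V2 = wseq w z M (k + int ?n + 1) (p@[b])"
    define ca where "ca = z a powr (real_of_int k / real M)"
    define cb where "cb = z b powr (real_of_int k / real M)"
    define za where "za = z a powr (1 / real M)"
    define zb where "zb = z b powr (1 / real M)"
    have pk1: "z x powr (real_of_int (k+1) / real M) = z x powr (real_of_int k / real M) * z x powr (1 / real M)"
      if "x < N" for x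
      using z_pos[OF that] by (simp add: powr_add[symmetric] add_divide_distrib)
    have e1: "Dl (map (\<phi> k) (p@[a])) = X * W1 * Z * ca"
      unfolding IHa Om_snoc Zk_snoc X_def W1_def Z_def ca_def by simp
    have e2: "Dl (map (\<phi> (k+1)) (p@[b])) = Xp * V2 * Y * (cb * zb)"
      unfolding IHb Om_snoc Zk_snoc Xp_def V2_def Y_def cb_def zb_def pk1[OF bd(5)]
      by (simp add: algebra_simps)
    have e3: "Dl (map (\<phi> (k+1)) (p@[a])) = Xp * W2 * Y * (ca * za)"
      unfolding IHa Om_snoc Zk_snoc Xp_def W2_def Y_def ca_def za_def pk1[OF bd(4)]
      by (simp add: algebra_simps)
    have e4: "Dl (map (\<phi> k) (p@[b])) = X * V1 * Z * cb"
      unfolding IHb Om_snoc Zk_snoc X_def V1_def Z_def cb_def by simp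
    have e5: "Dl (map (\<phi> (k+1)) p) = Xp * Y"
      unfolding IHp Xp_def Y_def by simp
    have "0 < Om (k+1) p" by (rule Om_pos[OF sp(1) bd(1)])
    moreover have "0 < Zk (k+1) p" by (rule Zk_pos[OF bd(1)])
    ultimately have nz: "Xp * Y \<noteq> 0" unfolding Xp_def Y_def by simp
    have "0 < W1" unfolding W1_def by (rule wseq_pos[OF sp(2) _ bd(2)]) simp
    then have W1nz: "W1 \<noteq> 0" by simp
    have "Dl (map (\<phi> k) (p@[a,b])) = X * Z * ca * cb * (W1 * V2 * zb - W2 * V1 * za)"
    proof -
      have "Dl (map (\<phi> k) (p@[a,b])) * (Xp * Y) = (X * Z * ca * cb * (W1 * V2 * zb - W2 * V1 * za)) * (Xp * Y)"
        using rec unfolding e1 e2 e3 e4 e5 by (simp add: algebra_simps)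
      then show ?thesis using nz by (metis mult_right_cancel)
    qed
    also have "\<dots> = Om k q * Zk k q"
    proof -
      have om0: "Om k q = X * W1 * wseq w z M (k + int ?n + 1) (p@[a,b])"
        using Om_snoc[of k "p@[a]" b] Om_snoc[of k p a] unfolding q X_def W1_def by (simp add: algebra_simps)
      have r: "wseq w z M (k + int ?n + 1) (p@[a,b]) = (W1 * V2 * zb - W2 * V1 * za) / W1"
        using wseq_rec[of "k + int ?n + 1" p a b]
        unfolding W1_def W2_def V1_def V2_def za_def zb_def zroot_eq[OF bd(4)] zroot_eq[OF bd(5)]
        by (simp add: algebra_simps)
      have om: "Om k q = X * W1 * ((W1 * V2 * zb - W2 * V1 * za) / W1)" unfolding om0 r ..
      have zk: "Zk k q = Z * ca * cb"
        unfolding q using Zk_snoc[of k "p@[a]" b] Zk_snoc[of k p a] Z_def ca_def cb_def by simp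
      show ?thesis unfolding om zk using W1nz by (simp add: field_simps)
    qed
    finally show ?thesis unfolding \<phi>_def q .
  qed
qed

end


context hungry begin

definition gg :: "int \<Rightarrow> nat \<Rightarrow> real" where "gg t r = gprod (\<lambda>\<tau>. z r - s \<tau>) t"
definition nu :: "int \<Rightarrow> int \<Rightarrow> nat \<Rightarrow> real" where
  "nu t m j = (\<Sum>r<N. psi r m * gg t r * z r ^ j)"
definition vv :: "int \<Rightarrow> int \<Rightarrow> nat \<Rightarrow> nat \<Rightarrow> real" where
  "vv t k i = (\<lambda>j. nu t (k + int i) j)"

lemma gg_pos: "r < N \<Longrightarrow> 0 < gg t r"
  unfolding gg_def gprod_def using z_gt_s[of r]
  by (auto intro!: prod_pos simp: less_diff_eq)

lemma gg_Suc: assumes r: "r < N" shows "gg (t+1) r = gg t r * (z r - s t)"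
proof -
  define f where "f \<tau> = z r - s \<tau>" for \<tau>
  have fnz: "f \<tau> \<noteq> 0" for \<tau> unfolding f_def using z_gt_s[OF r, of \<tau>] by simp
  show ?thesis
  proof (cases "0 \<le> t")
    case True
    have "{0..<t+1} = insert t {0..<t}" using True by auto
    then have "(\<Prod>\<tau>\<in>{0..<t+1}. f \<tau>) = f t * (\<Prod>\<tau>\<in>{0..<t}. f \<tau>)" by simp
    then show ?thesis using True unfolding gg_def gprod_def f_def by simp
  next
    case False
    have e1: "gprod f (t+1) = (\<Prod>\<tau>\<in>{t+1..<0}. inverse (f \<tau>))"
      unfolding gprod_def using False by auto
    have "{t..<0} = insert t {t+1..<0}" using False by auto
    then have e2: "gprod f t = inverse (f t) * (\<Prod>\<tau>\<in>{t+1..<0}. inverse (f \<tau>))"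
      unfolding gprod_def using False by simp
    show ?thesis unfolding gg_def f_def[symmetric] e1 e2 using fnz[of t] by simp
  qed
qed

lemma psi_M: assumes r: "r < N" shows "psi r (m + int M) = z r * psi r m"
proof -
  have "w (m + int M) r = w m r" using w_per[of "m + int M" r] w_per[of m r] by simp
  moreover have "z r powr (real_of_int (m + int M) / real M) = z r powr (real_of_int m / real M) * z r"
    using M_pos z_pos[OF r] by (simp add: add_divide_distrib powr_add)
  ultimately show ?thesis unfolding psi_def by simp
qed

lemma nu_t: "nu (t+1) m j = nu t m (Suc j) - s t * nu t m j"
  unfolding nu_def sum_distrib_left sum_subtractf[symmetric]
proof (intro sum.cong refl)
  fix r assume "r \<in> {..<N}"
  then have g: "gg (t+1) r = gg t r * (z r - s t)" by (intro gg_Suc) simp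
  show "psi r m * gg (t + 1) r * z r ^ j = psi r m * gg t r * z r ^ Suc j - s t * (psi r m * gg t r * z r ^ j)"
    unfolding g by (simp add: algebra_simps)
qed

lemma nu_M: "nu t (m + int M) j = nu t m (Suc j)"
  unfolding nu_def by (intro sum.cong refl) (simp add: psi_M algebra_simps)

definition summ :: "int \<Rightarrow> int \<Rightarrow> nat \<Rightarrow> nat list \<Rightarrow> real" where
  "summ k t n rs = (\<Prod>j<n. wseq w z M (k + int j) (take (Suc j) rs))
        * (\<Prod>j<n. z (rs ! j) powr (real_of_int k / real M)
                   * gprod (\<lambda>\<tau>. z (rs ! j) - s \<tau>) t)
        * (\<Prod>j<n. \<Prod>i<j. z (rs ! j) - z (rs ! i))"

lemma tau_sum: "tau w z s M N k t n = (\<Sum>S\<in>{S. S \<subseteq> {..<N} \<and> card S = n}. summ k t n (sorted_list_of_set S))"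
proof -
  consider "n = 0" | "N < n" | "n \<noteq> 0" "\<not> N < n" by linarith
  then show ?thesis
  proof cases
    case 1
    have "{S. S \<subseteq> {..<N} \<and> card S = 0} = {{}}"
      by (auto dest: finite_subset)
    then show ?thesis using 1 unfolding tau_def summ_def by simp
  next
    case 2
    have e: "{S. S \<subseteq> {..<N} \<and> card S = n} = {}"
      using 2 by (auto dest!: card_mono[OF finite_lessThan[of N]])
    show ?thesis using 2 unfolding tau_def e by simp
  next
    case 3 then show ?thesis unfolding tau_def summ_def Let_def by simp
  qed
qed

lemma sorted_props:
  assumes "S \<subseteq> {..<N}" "card S = n"
  shows "sorted_wrt (<) (sorted_list_of_set S)" "\<forall>x\<in>set (sorted_list_of_set S). x < N"
    "length (sorted_list_of_set S) = n" "distinct (sorted_list_of_set S)"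
proof -
  have f: "finite S" using assms(1) by (rule finite_subset) simp
  show "sorted_wrt (<) (sorted_list_of_set S)" by simp
  show "\<forall>x\<in>set (sorted_list_of_set S). x < N" using f assms by auto
  show "length (sorted_list_of_set S) = n" using assms by simp
  show "distinct (sorted_list_of_set S)" by simp
qed

lemma tau_det: "tau w z s M N k t n = Dl (map (vv t k) [0..<n])"
proof -
  define a where "a r i = gg t r * psi r (k + int i)" for r i
  define b where "b r j = z r ^ j" for r j
  have "Dl (map (vv t k) [0..<n]) = det (mat n n (\<lambda>(i,j). \<Sum>r<N. a r i * b r j))"
    unfolding Dl_def vv_def nu_def a_def b_def
    by (intro arg_cong[of _ _ det] eq_matI) (auto intro!: sum.cong simp: mult_ac)
  also have "\<dots> = (\<Sum>S\<in>{S. S \<subseteq> {..<N} \<and> card S = n}.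
        Dl (map a (sorted_list_of_set S)) * Dl (map b (sorted_list_of_set S)))"
    by (rule cauchy_binet)
  also have "\<dots> = (\<Sum>S\<in>{S. S \<subseteq> {..<N} \<and> card S = n}. summ k t n (sorted_list_of_set S))"
  proof (rule sum.cong[OF refl])
    fix S assume "S \<in> {S. S \<subseteq> {..<N} \<and> card S = n}"
    then have S: "S \<subseteq> {..<N}" "card S = n" by auto
    define q where "q = sorted_list_of_set S"
    note qp = sorted_props[OF S, folded q_def]
    have da: "Dl (map a q) = prod_list (map (gg t) q) * (Om k q * Zk k q)"
      unfolding a_def Dl_scale casorati[OF qp(1,2)] ..
    have inc: "z (q!i) < z (q!j)" if "i < j" "j < n" for i j
      using z_incr[of "q!i" "q!j"] qp that sorted_wrt_nth_less[OF qp(1)] by auto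
    have db: "Dl (map b q) = VP (map z q)"
    proof -
      have inj: "inj_on z {..<N}"
      proof (rule inj_onI)
        fix x y assume x: "x \<in> {..<N}" and y: "y \<in> {..<N}" and e: "z x = z y"
        show "x = y"
        proof (rule ccontr)
          assume "x \<noteq> y"
          then consider "x < y" | "y < x" by linarith
          then show False using z_incr[of x y] z_incr[of y x] x y e by cases auto
        qed
      qed
      have "distinct (map z q)" unfolding distinct_map using qp(4) inj_on_subset[OF inj] qp(2) by auto
      moreover have "\<forall>x\<in>set (map z q). x \<noteq> 0" using qp(2) z_pos by force
      ultimately have "Dl (map (\<lambda>x j. x^j) (map z q)) = VP (map z q)" by (rule vander)
      then show ?thesis unfolding b_def by (simp add: o_def)
    qed
    have pl: "prod_list (map (gg t) q) = (\<Prod>j<n. gg t (q!j))"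
      unfolding prod.list_conv_set_nth using qp(3) by (simp add: atLeast0LessThan)
    have o: "Om k q = (\<Prod>j<n. wseq w z M (k + int j) (take (Suc j) q))" unfolding Om_def qp(3) ..
    have zz: "Zk k q * (\<Prod>j<n. gg t (q!j)) = (\<Prod>j<n. z (q ! j) powr (real_of_int k / real M)
                   * gprod (\<lambda>\<tau>. z (q ! j) - s \<tau>) t)" unfolding Zk_def qp(3) gg_def prod.distrib ..
    have v: "VP (map z q) = (\<Prod>j<n. \<Prod>i<j. z (q ! j) - z (q ! i))"
      unfolding VP_def length_map qp(3) using qp(3) by (intro prod.cong refl) auto
    have "Dl (map a q) * Dl (map b q) = Om k q * (Zk k q * (\<Prod>j<n. gg t (q!j))) * VP (map z q)"
      unfolding da db pl by (simp only: ac_simps)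
    also have "\<dots> = summ k t n q" unfolding o zz v summ_def ..
    finally have "Dl (map a q) * Dl (map b q) = summ k t n q" .
    then show "Dl (map a (sorted_list_of_set S)) * Dl (map b (sorted_list_of_set S)) =
        summ k t n (sorted_list_of_set S)" unfolding q_def .
  qed
  also have "\<dots> = tau w z s M N k t n" by (rule tau_sum[symmetric])
  finally show ?thesis ..
qed

lemma summ_pos:
  assumes S: "S \<subseteq> {..<N}" "card S = n"
  shows "0 < summ k t n (sorted_list_of_set S)"
proof -
  define q where "q = sorted_list_of_set S"
  note qp = sorted_props[OF S, folded q_def]
  have "0 < Om k q" by (rule Om_pos[OF qp(1,2)])
  then have 1: "0 < (\<Prod>j<n. wseq w z M (k + int j) (take (Suc j) q))" unfolding Om_def qp(3) .
  have 2: "0 < (\<Prod>j<n. z (q ! j) powr (real_of_int k / real M) * gprod (\<lambda>\<tau>. z (q ! j) - s \<tau>) t)"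
  proof (rule prod_pos)
    fix j assume "j \<in> {..<n}"
    then have "q!j < N" using qp by auto
    then show "0 < z (q ! j) powr (real_of_int k / real M) * gprod (\<lambda>\<tau>. z (q ! j) - s \<tau>) t"
      using z_pos[of "q!j"] gg_pos[of "q!j" t] unfolding gg_def by simp
  qed
  have 3: "0 < (\<Prod>j<n. \<Prod>i<j. z (q ! j) - z (q ! i))"
  proof (intro prod_pos)
    fix j i assume "j \<in> {..<n}" "i \<in> {..<j}"
    then show "0 < z (q ! j) - z (q ! i)"
      using z_incr[of "q!i" "q!j"] qp sorted_wrt_nth_less[OF qp(1), of i j] by auto
  qed
  show ?thesis using 1 2 3 unfolding summ_def q_def[symmetric] by simp
qed

lemma tau_pos: "0 < n \<Longrightarrow> n \<le> N \<Longrightarrow> 0 < tau w z s M N k t n"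
  unfolding tau_sum
proof (rule sum_pos)
  show "finite {S. S \<subseteq> {..<N} \<and> card S = n}"
    by (rule finite_subset[of _ "Pow {..<N}"]) auto
  assume "n \<le> N"
  then have "{..<n} \<in> {S. S \<subseteq> {..<N} \<and> card S = n}" by auto
  then show "{S. S \<subseteq> {..<N} \<and> card S = n} \<noteq> {}" by blast
  fix S assume "S \<in> {S. S \<subseteq> {..<N} \<and> card S = n}"
  then show "0 < summ k t n (sorted_list_of_set S)" by (intro summ_pos) auto
qed

lemma tau_0: "tau w z s M N k t 0 = 1" unfolding tau_def by simp
lemma tau_big: "N < n \<Longrightarrow> tau w z s M N k t n = 0" unfolding tau_def by simp
lemma tau_nonneg: "0 \<le> tau w z s M N k t n"
  using tau_pos[of n k t] tau_0[of k t] tau_big[of n k t] by (cases "n = 0"; cases "N < n") auto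
lemma tau_pos': "n \<le> N \<Longrightarrow> 0 < tau w z s M N k t n"
  using tau_pos[of n k t] tau_0[of k t] by (cases "n = 0") auto

end


lemma neg1_sq: "(-1::real)^n * (-1)^n = 1"
  by (induct n) auto

declare upt_Suc[simp del]

context hungry begin

abbreviation T where "T k t n \<equiv> tau w z s M N k t n"

lemma map_vv1: "map (vv t (k+1)) [0..<m] = map (vv t k) [1..<Suc m]"
proof -
  have "[1..<Suc m] = map Suc [0..<m]" by (simp add: map_Suc_upt)
  then show ?thesis unfolding vv_def by (simp add: algebra_simps)
qed

lemma map_vvM: "map (vv t (k + int M)) [0..<m] = map sh (map (vv t k) [0..<m])"
  unfolding vv_def sh_def
  by (auto simp: nu_M[symmetric] algebra_simps)

lemma map_vvt: "map (\<lambda>v j. v (Suc j) - s t * v j) (map (vv t k) [0..<m]) = map (vv (t+1) k) [0..<m]"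
  unfolding vv_def by (auto simp: nu_t)

lemma T_k1: "T (k+1) t m = Dl (map (vv t k) [1..<Suc m])"
  unfolding tau_det map_vv1 ..

lemma T_t1: "T k (t+1) m = (-1)^m * Dl (map (vv t k) [0..<m] @ [sp (s t)])"
  unfolding Dl_border map_vvt tau_det
  by (simp add: mult.assoc[symmetric] neg1_sq)

lemma T_M: "T (k + int M) t m = Dl (map sh (map (vv t k) [0..<m]))"
  unfolding tau_det map_vvM ..

lemma T_Mt1: "T (k + int M) (t+1) m = (-1)^m * Dl (map sh (map (vv t k) [0..<m]) @ [sp (s t)])"
  unfolding T_t1 map_vvM ..

lemma T_k1t1: "T (k+1) (t+1) m = (-1)^m * Dl (map (vv t k) [1..<Suc m] @ [sp (s t)])"
  unfolding T_t1 map_vv1 ..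

lemma bilin1:
  "T k t (n+1) * T (k+1) (t+1) (n+1) = T k (t+1) (n+1) * T (k+1) t (n+1) + T k t (n+2) * T (k+1) (t+1) n"
proof -
  define v where "v = vv t k"
  define A where "A = map v [1..<Suc n]"
  define b where "b = v (Suc n)"
  define \<sigma> where "\<sigma> = sp (s t)"
  define e where "e = uv (Suc n)"
  have lA: "length A = n" unfolding A_def by simp
  have L3: "map v [1..<Suc (Suc n)] = A @ [b]" unfolding A_def b_def by (simp add: upt_Suc_append)
  have L1: "map v [0..<Suc (Suc n)] = v 0 # A @ [b]" using L3 by (simp add: upt_conv_Cons)
  have L2: "map v [0..<Suc n] = v 0 # A" unfolding A_def by (simp add: upt_conv_Cons)
  have X1: "T k t (n+2) = (-1)^n * Dl (A@[v 0,b])"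
    using tau_det[of k t "n+2"] Dl_move[of "[]" "v 0" A "[b]"] unfolding v_def[symmetric] lA
    by (simp add: L1[simplified])
  have X2: "T (k+1) (t+1) n = (-1)^n * Dl (A@[\<sigma>,e])"
    unfolding T_k1t1 v_def[symmetric] A_def[symmetric] \<sigma>_def[symmetric] e_def
    using Dl_unit_last[of "A@[\<sigma>]"] lA by simp
  have X3: "T k t (n+1) = (-1)^n * Dl (A@[v 0,e])"
    using tau_det[of k t "n+1"] Dl_move[of "[]" "v 0" A "[]"] Dl_unit_last[of "A@[v 0]"] lA
    unfolding v_def[symmetric] e_def by (simp add: L2[simplified])
  have X4: "T (k+1) (t+1) (n+1) = (-1)^(n+1) * Dl (A@[b,\<sigma>])"
    using T_k1t1[of k t "n+1"] unfolding v_def[symmetric] \<sigma>_def[symmetric] by (simp add: L3[simplified])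
  have X5: "T k (t+1) (n+1) = (-1)^(n+1) * ((-1)^n * Dl (A@[v 0,\<sigma>]))"
    using T_t1[of k t "n+1"] Dl_move[of "[]" "v 0" A "[\<sigma>]"] lA
    unfolding v_def[symmetric] \<sigma>_def[symmetric] by (simp add: L2[simplified])
  have X6: "T (k+1) t (n+1) = Dl (A@[b,e])"
    using T_k1[of k t "n+1"] Dl_unit_last[of "A@[b]"] lA
    unfolding v_def[symmetric] e_def by (simp add: L3[simplified])
  have pl: "Dl (A@[v 0,b]) * Dl (A@[\<sigma>,e]) - Dl (A@[v 0,\<sigma>]) * Dl (A@[b,e]) + Dl (A@[v 0,e]) * Dl (A@[b,\<sigma>]) = 0"
    by (rule pluecker)
  show ?thesis unfolding X1 X2 X3 X4 X5 X6
    using pl by (cases "even n") (simp_all add: algebra_simps)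
qed

lemma bilin2:
  "T k (t+1) (n+2) * T (k + int M) t (n+1) =
   - s t * T k t (n+2) * T (k + int M) (t+1) (n+1) + T (k + int M) t (n+2) * T k (t+1) (n+1)"
proof -
  define v where "v = vv t k"
  define A where "A = map v [0..<Suc n]"
  define b where "b = v (Suc n)"
  define \<sigma> where "\<sigma> = sp (s t)"
  define e0 where "e0 = uv 0"
  define e where "e = uv (Suc (Suc n))"
  have lA: "length A = Suc n" unfolding A_def by simp
  have L1: "map v [0..<Suc (Suc n)] = A @ [b]" unfolding A_def b_def by (simp add: upt_Suc_append)
  have Y1: "T k (t+1) (n+2) = (-1)^n * Dl (A@[b,\<sigma>])"
  proof -
    have "T k (t+1) (Suc (Suc n)) = (-1)^(Suc (Suc n)) * Dl ((A@[b])@[\<sigma>])"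
      using T_t1[of k t "Suc (Suc n)"] unfolding v_def[symmetric] L1 \<sigma>_def .
    then show ?thesis by simp
  qed
  have Y2: "T (k + int M) t (n+1) = (-1)^(n+1) * Dl (A@[e0,e])"
  proof -
    have "Dl (A@[e0,e]) = (-1)^(n+1) * Dl (map sh A)"
      using Dl_unit_last[of "A@[e0]"] Dl_unit0[of A] lA unfolding e0_def e_def by simp
    then show ?thesis using T_M[of k t "n+1"] unfolding v_def[symmetric]
      by (simp add: mult.assoc[symmetric] neg1_sq A_def)
  qed
  have Y3: "T k t (n+2) = Dl (A@[b,e])"
    using tau_det[of k t "n+2"] Dl_unit_last[of "A@[b]"] lA unfolding v_def[symmetric] e_def
    by (simp add: L1[simplified])
  have Y4: "s t * T (k + int M) (t+1) (n+1) = - Dl (A@[\<sigma>,e0])"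
  proof -
    have shs: "sh \<sigma> = (\<lambda>j. s t * \<sigma> j)" unfolding sh_def \<sigma>_def sp_def by simp
    have "Dl (A@[\<sigma>,e0]) = (-1)^n * (s t * Dl (map sh A @ [\<sigma>]))"
      using Dl_unit0[of "A@[\<sigma>]"] lA Dl_last_scale[of "map sh A" "s t" \<sigma>]
      unfolding e0_def by (simp add: shs)
    then show ?thesis using T_Mt1[of k t "n+1"] unfolding v_def[symmetric] \<sigma>_def[symmetric]
      by (cases "even n") (simp_all add: algebra_simps A_def)
  qed
  have Y5: "T (k + int M) t (n+2) = (-1)^n * Dl (A@[b,e0])"
  proof -
    have "Dl (A@[b,e0]) = (-1)^n * Dl (map sh (A@[b]))"
      using Dl_unit0[of "A@[b]"] lA unfolding e0_def by simp
    then show ?thesis using T_M[of k t "n+2"] unfolding v_def[symmetric]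
      by (simp add: L1[simplified] mult.assoc[symmetric] neg1_sq)
  qed
  have Y6: "T k (t+1) (n+1) = (-1)^(n+1) * Dl (A@[\<sigma>,e])"
    using T_t1[of k t "n+1"] Dl_unit_last[of "A@[\<sigma>]"] lA
    unfolding v_def[symmetric] \<sigma>_def[symmetric] e_def by (simp add: A_def)
  have pl: "Dl (A@[b,\<sigma>]) * Dl (A@[e0,e]) - Dl (A@[b,e0]) * Dl (A@[\<sigma>,e]) + Dl (A@[b,e]) * Dl (A@[\<sigma>,e0]) = 0"
    by (rule pluecker)
  have "- s t * T k t (n+2) * T (k + int M) (t+1) (n+1) = - T k t (n+2) * (s t * T (k + int M) (t+1) (n+1))"
    by (simp add: algebra_simps)
  also have "\<dots> = Dl (A@[b,e]) * Dl (A@[\<sigma>,e0])" unfolding Y4 Y3 by simp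
  finally have "- s t * T k t (n+2) * T (k + int M) (t+1) (n+1) = Dl (A@[b,e]) * Dl (A@[\<sigma>,e0])" .
  then show ?thesis unfolding Y1 Y2 Y5 Y6
    using pl by (cases "even n") (simp_all add: algebra_simps)
qed

lemma lin1: "T k (t+1) 1 = T (k + int M) t 1 - s t * T k t 1"
  unfolding tau_det by (simp add: Dl_single vv_def nu_t nu_M[symmetric] upt_Suc)

end


context hungry begin

lemma Tnz: "m \<le> N \<Longrightarrow> T k t m \<noteq> 0"
  using tau_pos'[of m k t] by simp

lemma Tp: "m \<le> N \<Longrightarrow> 0 < T k t m"
  using tau_pos'[of m k t] by simp

lemma prod_qv: "(\<Prod>j<m. qv w z s M N (k + int j) t 0) = T (k + int m) t 1 / T k t 1"
proof (induction m)
  case 0 then show ?case using Tnz[of 1 k t] N_pos by simp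
next
  case (Suc m)
  have "qv w z s M N (k + int m) t 0 = T (k + int (Suc m)) t 1 / T (k + int m) t 1"
    unfolding qv_def tau_0 by (simp add: algebra_simps)
  then show ?case using Suc Tnz[of 1 "k + int m" t] N_pos by simp
qed

lemma main:
  shows
   "(\<forall>k t. ev w z s M N k t (N-1) = 0 \<and> etv w z s M N k t (N-1) = 0)
    \<and> (\<forall>k t n. n < N \<longrightarrow>
         qv w z s M N k (t+1) n = dv w z s M N k t n + etv w z s M N k t n
       \<and> ev w z s M N k (t+1) n = fv w z s M N k t n + etv w z s M N (k + int M) t n)
    \<and> (\<forall>k t n. n + 1 < N \<longrightarrow>
         dv w z s M N k t (n+1) = dv w z s M N k t n * qv w z s M N k t (n+1) / qv w z s M N k (t+1) n
       \<and> fv w z s M N k t (n+1) = fv w z s M N k t n * ev w z s M N k t (n+1) / ev w z s M N k (t+1) n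
       \<and> etv w z s M N (k+1) t n = etv w z s M N k t n * qv w z s M N k t (n+1) / qv w z s M N k (t+1) n
       \<and> etv w z s M N k t (n+1) = etv w z s M N (k + int M) t n * ev w z s M N k t (n+1) / ev w z s M N k (t+1) n)
    \<and> (\<forall>k t. dv w z s M N k t 0 = qv w z s M N k t 0
       \<and> fv w z s M N k t 0 = - ev w z s M N k t 0 * s t
            / ((\<Prod>j<M. qv w z s M N (k + int j) t 0) - s t)
       \<and> etv w z s M N k t 0 = ev w z s M N k t 0 * (\<Prod>j<M. qv w z s M N (k + int j) t 0)
            / ((\<Prod>j<M. qv w z s M N (k + int j) t 0) - s t))
    \<and> (\<forall>k t n. n < N \<longrightarrow> 0 < qv w z s M N k t n \<and> 0 < dv w z s M N k t n)
    \<and> (\<forall>k t n. n + 1 < N \<longrightarrow> 0 < ev w z s M N k t n \<and> 0 < etv w z s M N k t n)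
    \<and> ((\<forall>t. s t \<le> 0) \<longrightarrow> (\<forall>k t n. n < N \<longrightarrow> 0 \<le> fv w z s M N k t n))"
proof (intro conjI allI impI)
  fix k t
  have "T k t (N - 1 + 2) = 0" using N_pos by (intro tau_big) simp
  then show "ev w z s M N k t (N-1) = 0" "etv w z s M N k t (N-1) = 0"
    unfolding ev_def etv_def by simp_all
next
  fix k t n assume n: "n < N"
  have nz: "T k (t+1) n \<noteq> 0" "T k (t+1) (n+1) \<noteq> 0" "T (k+1) (t+1) n \<noteq> 0" "T k t (n+1) \<noteq> 0"
    using n by (auto intro!: Tnz)
  define P0 where "P0 = T k (t+1) n"
  define P1 where "P1 = T k (t+1) (n+1)"
  define Q0 where "Q0 = T (k+1) (t+1) n"
  define Q1 where "Q1 = T (k+1) (t+1) (n+1)"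
  define R1 where "R1 = T k t (n+1)"
  define R2 where "R2 = T k t (n+2)"
  define S1 where "S1 = T (k+1) t (n+1)"
  have b: "R1 * Q1 = P1 * S1 + R2 * Q0" unfolding R1_def Q1_def P1_def S1_def R2_def Q0_def by (rule bilin1)
  have "dv w z s M N k t n + etv w z s M N k t n = P0 * (P1 * S1 + R2 * Q0) / (R1 * P1 * Q0)"
    unfolding dv_def etv_def P0_def P1_def Q0_def R1_def R2_def S1_def using nz
    by (simp add: field_simps)
  also have "\<dots> = P0 * Q1 / (P1 * Q0)" unfolding b[symmetric] using nz
    unfolding R1_def P1_def Q0_def by (simp add: field_simps)
  also have "\<dots> = qv w z s M N k (t+1) n" unfolding qv_def P0_def Q1_def P1_def Q0_def by simp
  finally show "qv w z s M N k (t+1) n = dv w z s M N k t n + etv w z s M N k t n" ..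
next
  fix k t n assume n: "n < N"
  have nz: "T k (t+1) (n+1) \<noteq> 0" "T (k + int M) (t+1) (n+1) \<noteq> 0" "T (k + int M) t (n+1) \<noteq> 0"
    using n by (auto intro!: Tnz)
  define E where "E = T k (t+1) (n+2)"
  define G where "G = T (k + int M) (t+1) n"
  define P1 where "P1 = T k (t+1) (n+1)"
  define H1 where "H1 = T (k + int M) (t+1) (n+1)"
  define R2 where "R2 = T k t (n+2)"
  define K1 where "K1 = T (k + int M) t (n+1)"
  define K2 where "K2 = T (k + int M) t (n+2)"
  have b: "E * K1 = - s t * R2 * H1 + K2 * P1"
    unfolding E_def K1_def R2_def H1_def K2_def P1_def by (rule bilin2)
  have "fv w z s M N k t n + etv w z s M N (k + int M) t n = G * (- s t * R2 * H1 + K2 * P1) / (P1 * K1 * H1)"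
    unfolding fv_def etv_def E_def G_def P1_def H1_def R2_def K1_def K2_def using nz
    by (simp add: field_simps)
  also have "\<dots> = E * G / (P1 * H1)" unfolding b[symmetric] using nz
    unfolding P1_def K1_def H1_def by (simp add: field_simps)
  also have "\<dots> = ev w z s M N k (t+1) n" unfolding ev_def E_def G_def P1_def H1_def by simp
  finally show "ev w z s M N k (t+1) n = fv w z s M N k t n + etv w z s M N (k + int M) t n" ..
next
  fix k t n assume n: "n + 1 < N"
  have nz: "\<And>k' t' m. m \<le> n + 2 \<Longrightarrow> T k' t' m \<noteq> 0" using n by (intro Tnz) simp
  show "dv w z s M N k t (n+1) = dv w z s M N k t n * qv w z s M N k t (n+1) / qv w z s M N k (t+1) n"
    unfolding dv_def qv_def using nz[of 0] nz[of 1] nz[of "n"] nz[of "n+1"] nz[of "n+2"]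
    by (simp add: field_simps)
  show "fv w z s M N k t (n+1) = fv w z s M N k t n * ev w z s M N k t (n+1) / ev w z s M N k (t+1) n"
    unfolding fv_def ev_def using nz[of "n"] nz[of "n+1"] nz[of "n+2"]
    by (simp add: field_simps)
  show "etv w z s M N (k+1) t n = etv w z s M N k t n * qv w z s M N k t (n+1) / qv w z s M N k (t+1) n"
    unfolding etv_def qv_def using nz[of "n"] nz[of "n+1"] nz[of "n+2"]
    by (simp add: field_simps)
  show "etv w z s M N k t (n+1) = etv w z s M N (k + int M) t n * ev w z s M N k t (n+1) / ev w z s M N k (t+1) n"
    unfolding etv_def ev_def using nz[of "n"] nz[of "n+1"] nz[of "n+2"]
    by (simp add: field_simps)
next
  fix k t
  show "dv w z s M N k t 0 = qv w z s M N k t 0" unfolding dv_def qv_def tau_0 by simp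
next
  fix k t
  have nz: "T k t 1 \<noteq> 0" "T k (t+1) 1 \<noteq> 0" "T (k + int M) t 1 \<noteq> 0" using N_pos by (auto intro!: Tnz)
  have P: "(\<Prod>j<M. qv w z s M N (k + int j) t 0) = T (k + int M) t 1 / T k t 1" by (rule prod_qv)
  have Ps: "(\<Prod>j<M. qv w z s M N (k + int j) t 0) - s t = T k (t+1) 1 / T k t 1"
    unfolding P lin1 using nz by (simp add: field_simps)
  show "fv w z s M N k t 0 = - ev w z s M N k t 0 * s t / ((\<Prod>j<M. qv w z s M N (k + int j) t 0) - s t)"
    unfolding Ps unfolding fv_def ev_def tau_0 using nz by (simp add: field_simps)
  show "etv w z s M N k t 0 = ev w z s M N k t 0 * (\<Prod>j<M. qv w z s M N (k + int j) t 0)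
            / ((\<Prod>j<M. qv w z s M N (k + int j) t 0) - s t)"
    unfolding Ps unfolding P etv_def ev_def tau_0 using nz by (simp add: field_simps)
next
  fix k t n assume n: "n < N"
  have p: "\<And>k' t' m. m \<le> n + 1 \<Longrightarrow> 0 < T k' t' m" using n by (intro Tp) simp
  show "0 < qv w z s M N k t n" unfolding qv_def using p[of n] p[of "n+1"] by (simp add: divide_pos_pos)
  show "0 < dv w z s M N k t n" unfolding dv_def using p[of n] p[of "n+1"] by (simp add: divide_pos_pos)
next
  fix k t n assume n: "n + 1 < N"
  have p: "\<And>k' t' m. m \<le> n + 2 \<Longrightarrow> 0 < T k' t' m" using n by (intro Tp) simp
  show "0 < ev w z s M N k t n" unfolding ev_def using p[of n] p[of "n+1"] p[of "n+2"] by (simp add: divide_pos_pos)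
  show "0 < etv w z s M N k t n" unfolding etv_def using p[of n] p[of "n+1"] p[of "n+2"] by (simp add: divide_pos_pos)
next
  fix k t n assume sn: "\<forall>t. s t \<le> 0" and n: "n < N"
  have p: "\<And>k' t' m. m \<le> n + 1 \<Longrightarrow> 0 < T k' t' m" using n by (intro Tp) simp
  have "0 \<le> T k t (n+2) * T (k + int M) (t+1) n / (T k (t+1) (n+1) * T (k + int M) t (n+1))"
  proof (rule divide_nonneg_pos)
    show "0 \<le> T k t (n+2) * T (k + int M) (t+1) n"
      using p[of n k t] tau_nonneg[of k t "n+2"] p[of n "k + int M" "t+1"] by simp
    show "0 < T k (t+1) (n+1) * T (k + int M) t (n+1)"
      using p[of "n+1" k "t+1"] p[of "n+1" "k + int M" t] by simp
  qed
  moreover have "0 \<le> - s t" using sn by simp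
  ultimately show "0 \<le> fv w z s M N k t n" unfolding fv_def by (metis mult_nonneg_nonneg)
qed

end

theorem corollary1:
  fixes M N :: nat and z :: "nat \<Rightarrow> real" and s :: "int \<Rightarrow> real"
    and w :: "int \<Rightarrow> nat \<Rightarrow> real"
  assumes M_pos: "0 < M" and N_pos: "0 < N"
    and z0_pos: "0 < z 0"
    and z_incr: "\<And>i j. i < j \<Longrightarrow> j < N \<Longrightarrow> z i < z j"
    and s_less: "\<And>t. s t < z 0"
    and w_pos: "\<And>m r. r < N \<Longrightarrow> 0 < w m r"
    and w_per: "\<And>m r. w m r = w (m mod int M) r"
    and positivity: "\<And>m p a b. 0 \<le> m \<Longrightarrow> m < int M \<Longrightarrow>
        sorted_wrt (<) (p @ [a, b]) \<Longrightarrow> b < N \<Longrightarrow>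
        wseq w z M m (p @ [a]) * wseq w z M (m+1) (p @ [b]) * zroot M z b
        > wseq w z M (m+1) (p @ [a]) * wseq w z M m (p @ [b]) * zroot M z a"
  shows
   "(\<forall>k t. ev w z s M N k t (N-1) = 0 \<and> etv w z s M N k t (N-1) = 0)
    \<and> (\<forall>k t n. n < N \<longrightarrow>
         qv w z s M N k (t+1) n = dv w z s M N k t n + etv w z s M N k t n
       \<and> ev w z s M N k (t+1) n = fv w z s M N k t n + etv w z s M N (k + int M) t n)
    \<and> (\<forall>k t n. n + 1 < N \<longrightarrow>
         dv w z s M N k t (n+1) = dv w z s M N k t n * qv w z s M N k t (n+1) / qv w z s M N k (t+1) n
       \<and> fv w z s M N k t (n+1) = fv w z s M N k t n * ev w z s M N k t (n+1) / ev w z s M N k (t+1) n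
       \<and> etv w z s M N (k+1) t n = etv w z s M N k t n * qv w z s M N k t (n+1) / qv w z s M N k (t+1) n
       \<and> etv w z s M N k t (n+1) = etv w z s M N (k + int M) t n * ev w z s M N k t (n+1) / ev w z s M N k (t+1) n)
    \<and> (\<forall>k t. dv w z s M N k t 0 = qv w z s M N k t 0
       \<and> fv w z s M N k t 0 = - ev w z s M N k t 0 * s t
            / ((\<Prod>j<M. qv w z s M N (k + int j) t 0) - s t)
       \<and> etv w z s M N k t 0 = ev w z s M N k t 0 * (\<Prod>j<M. qv w z s M N (k + int j) t 0)
            / ((\<Prod>j<M. qv w z s M N (k + int j) t 0) - s t))
    \<and> (\<forall>k t n. n < N \<longrightarrow> 0 < qv w z s M N k t n \<and> 0 < dv w z s M N k t n)
    \<and> (\<forall>k t n. n + 1 < N \<longrightarrow> 0 < ev w z s M N k t n \<and> 0 < etv w z s M N k t n)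
    \<and> ((\<forall>t. s t \<le> 0) \<longrightarrow> (\<forall>k t n. n < N \<longrightarrow> 0 \<le> fv w z s M N k t n))"
proof -
  interpret hungry M N z s w
    by (unfold_locales; fact assms)
  show ?thesis by (rule main)
qed


end
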